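(* Let $0<\varepsilon\le 1$. Then there exists an admissible cutoff function $\hat a$ of any type: $(a)$, $(b)$ or $(c)$ such that $0\le \hat a\le 1$, $$\|\hat a^{(k)}\|_\infty\le \tilde{c}(\tilde{c}/\varepsilon)^kk^k(\ln k)^{k(1+\varepsilon)}, \; k\ge 3, \quad\text{and}\quad \|\hat a^{(k)}\|_\infty\le \tilde{c}(\tilde{c}/\varepsilon)^kk^k,\; k=1,2,$$ where $\tilde{c}>1$ is an absolute constant (e.g. $\tilde{c}=88$). Moreover, $\hat a^{(k)}(1)=0$ for $k\ge 1$. Furthermore, there exists an admissible function $\hat a$ of type $(a)$, $(b)$ or $(c)$ such that the derivative estimates $\|\hat a^{(k)}\|_\infty\le \tilde{c}(\tilde{c}/\varepsilon)^kk^k(\ln k)^{k(1+\varepsilon)}$ (for sufficiently large $k$) still hold with the term $(\ln k)^{k(1+\varepsilon)}$ replaced by $(\ln k)^k(\ln\ln k)^{k(1+\varepsilon)}$ or, in general, by a product of the form $$(\ln k)^k \cdots (\underbrace{\ln\cdots\ln}_\ell k)^k (\underbrace{\ln\cdots\ln}_{\ell+1} k)^{k(1+\varepsilon)}$$ with $\ell\ge 1$, for sufficiently large $k$ and with $\tilde{c}$ depending on $\ell$.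
   Context: A function $\hat a\in C^\infty[0,\infty)$ ($\hat a\ge 0$ if needed) is admissible of type $(a)$ if $\operatorname{supp}\hat a\subset[0,2]$ and $\hat a(t)=1$ for $t\in[0,1]$; of type $(b)$ if $\operatorname{supp}\hat a\subset[1/2,2]$; of type $(c)$ if $\operatorname{supp}\hat a\subset[1/2,2]$ and $|\hat a(t)|^2+|\hat a(t/2)|^2=1$ for $t\in[1,2]$. *)

theory Defs
  imports "HOL-Analysis.Analysis"
begin

text \<open>Smoothness on [0,\<infinity>): D is the sequence of (one-sided at 0) derivatives of f,
  with D 0 = f and D (Suc k) the derivative of D k relative to [0,\<infinity>).
  Since [0,\<infinity>) has no isolated points, D k is uniquely determined on [0,\<infinity>).\<close>
definition smooth_derivs_nonneg :: "(real \<Rightarrow> real) \<Rightarrow> (nat \<Rightarrow> real \<Rightarrow> real) \<Rightarrow> bool" where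
  "smooth_derivs_nonneg f D \<longleftrightarrow> (\<forall>x\<ge>0. D 0 x = f x) \<and>
     (\<forall>k. \<forall>x\<ge>0. (D k has_real_derivative D (Suc k) x) (at x within {0..}))"

definition supp_nonneg :: "(real \<Rightarrow> real) \<Rightarrow> real set" where
  "supp_nonneg f = closure {x. 0 \<le> x \<and> f x \<noteq> 0}"

datatype adm_type = TypeA | TypeB | TypeC

definition admissible :: "adm_type \<Rightarrow> (real \<Rightarrow> real) \<Rightarrow> bool" where
  "admissible ty f \<longleftrightarrow> (case ty of
      TypeA \<Rightarrow> supp_nonneg f \<subseteq> {0..2} \<and> (\<forall>t\<in>{0..1}. f t = 1)
    | TypeB \<Rightarrow> supp_nonneg f \<subseteq> {1/2..2}
    | TypeC \<Rightarrow> supp_nonneg f \<subseteq> {1/2..2} \<and> (\<forall>t\<in>{1..2}. \<bar>f t\<bar>^2 + \<bar>f (t/2)\<bar>^2 = 1))"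

end

theory Submission
  imports Defs
begin

definition avg :: "real \<Rightarrow> (real \<Rightarrow> real) \<Rightarrow> real \<Rightarrow> real" where
  "avg a g x = integral {x - a..x} g / a"

lemma avg_split:
  assumes "\<And>u v. g integrable_on {u..v}" "c \<le> x - a" "0 \<le> a"
  shows "avg a g x = (integral {c..x} g - integral {c..x-a} g) / a"
proof -
  have "integral {c..x-a} g + integral {x-a..x} g = integral {c..x} g"
    by (rule Henstock_Kurzweil_Integration.integral_combine) (use assms in auto)
  then show ?thesis unfolding avg_def by (simp add: algebra_simps)
qed

lemma avg_deriv:
  fixes g :: "real \<Rightarrow> real"
  assumes a: "a > 0" and g: "continuous_on UNIV g"
  shows "(avg a g has_real_derivative (g x - g (x - a)) / a) (at x)"
proof -
  define c where "c = x - a - 2"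
  have int: "\<And>u v. g integrable_on {u..v}"
    by (intro integrable_continuous_interval continuous_on_subset[OF g]) simp
  define F where "F y = (integral {c..y} g - integral {c..y-a} g) / a" for y
  have eq: "\<And>y. y \<in> ball x 1 \<Longrightarrow> F y = avg a g y"
  proof -
    fix y assume "y \<in> ball x 1"
    then have "c \<le> y - a" by (auto simp: c_def dist_real_def)
    then show "F y = avg a g y" unfolding F_def using avg_split[OF int, of c y a] a by simp
  qed
  have d1: "((\<lambda>y. integral {c..y} g) has_real_derivative g t) (at t)" if "t > c" for t
  proof -
    have "((\<lambda>y. integral {c..y} g) has_real_derivative g t) (at t within {c..t+1})"
      by (rule integral_has_real_derivative) (use that in \<open>auto intro: continuous_on_subset[OF g]\<close>)
    moreover have "t \<in> interior {c..t+1}" using that by simp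
    ultimately show ?thesis by (metis at_within_interior)
  qed
  have D1: "((\<lambda>y. integral {c..y} g) has_real_derivative g x) (at x)"
    by (rule d1) (use a in \<open>simp add: c_def\<close>)
  have D2: "((\<lambda>y. integral {c..y-a} g) has_real_derivative g (x - a) * 1) (at x)"
  proof (rule DERIV_chain2[of "\<lambda>y. integral {c..y} g"])
    show "((\<lambda>y. integral {c..y} g) has_real_derivative g (x - a)) (at (x - a))"
      by (rule d1) (use a in \<open>simp add: c_def\<close>)
    show "((\<lambda>y. y - a) has_real_derivative 1) (at x)"
      by (auto intro!: derivative_eq_intros)
  qed
  have "(F has_real_derivative (g x - g (x - a)) / a) (at x)"
    unfolding F_def using DERIV_cdivide[OF DERIV_diff[OF D1 D2], of a] by simp
  then show ?thesis
    by (rule has_field_derivative_transform_within_open[of F _ _ "ball x 1" "avg a g"]) (use eq in auto)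
qed

lemma avg_bound:
  fixes g :: "real \<Rightarrow> real"
  assumes a: "a > 0" and int: "g integrable_on {x-a..x}"
    and b: "\<And>y. y \<in> {x-a..x} \<Longrightarrow> \<bar>g y - c\<bar> \<le> B"
  shows "\<bar>avg a g x - c\<bar> \<le> B"
proof -
  have i2: "(\<lambda>y. g y - c) integrable_on {x-a..x}"
    using integrable_diff[OF int integrable_const_ivl[of c]] by simp
  have "integral {x-a..x} (\<lambda>y. g y - c) = integral {x-a..x} g - a * c"
    using integral_diff[OF int integrable_const_ivl[of c]] a by simp
  moreover have "integral {x-a..x} (\<lambda>y. g y - c) \<le> integral {x-a..x} (\<lambda>y. B)"
    by (rule integral_le[OF i2 integrable_const_ivl]) (use b in \<open>simp add: abs_le_iff\<close>)
  moreover have "integral {x-a..x} (\<lambda>y. -B) \<le> integral {x-a..x} (\<lambda>y. g y - c)"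
    by (rule integral_le[OF integrable_const_ivl i2]) (use b in \<open>force simp add: abs_le_iff\<close>)
  ultimately have "integral {x-a..x} g - a * c \<le> a * B" "- (a * B) \<le> integral {x-a..x} g - a * c"
    using a by simp_all
  then have "\<bar>integral {x-a..x} g / a - c\<bar> \<le> B"
    using a by (simp add: abs_le_iff field_simps)
  then show ?thesis unfolding avg_def .
qed

lemma avg_cont:
  fixes g :: "real \<Rightarrow> real"
  assumes a: "a > 0" and int: "\<And>u v. g integrable_on {u..v}"
  shows "continuous_on UNIV (avg a g)"
proof -
  have "isCont (avg a g) x" for x
  proof -
    define c where "c = x - a - 2"
    define G where "G y = integral {c..y} g" for y
    have Gc: "continuous_on {c..x+2} G"
      unfolding G_def by (rule indefinite_integral_continuous_1[OF int])
    define F where "F y = (G y - G (y - a)) / a" for y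
    have eq: "\<And>y. y \<in> ball x 1 \<Longrightarrow> F y = avg a g y"
    proof -
      fix y assume "y \<in> ball x 1"
      then have "c \<le> y - a" by (auto simp: c_def dist_real_def)
      then show "F y = avg a g y" unfolding F_def G_def using avg_split[OF int, of c y a] a by simp
    qed
    have s1: "ball x 1 \<subseteq> {c..x+2}" using a by (auto simp: c_def dist_real_def)
    have s2: "(\<lambda>y. y - a) ` ball x 1 \<subseteq> {c..x+2}" using a by (auto simp: c_def dist_real_def)
    have "continuous_on (ball x 1) F"
      unfolding F_def
      apply (intro continuous_on_divide continuous_on_diff continuous_on_const)
        apply (rule continuous_on_subset[OF Gc s1])
       apply (rule continuous_on_compose2[OF Gc _ s2])
       apply (intro continuous_intros)
      using a by simp
    then have "continuous_on (ball x 1) (avg a g)"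
      by (rule continuous_on_cong[THEN iffD1, rotated 2]) (use eq in auto)
    then show ?thesis
      using continuous_on_eq_continuous_at[of "ball x 1" "avg a g"] by simp
  qed
  then show ?thesis by (simp add: continuous_at_imp_continuous_on)
qed

definition R :: "real \<Rightarrow> real" where "R x = max 0 (min 1 x)"

lemma R_cont: "continuous_on UNIV R"
  unfolding R_def by (intro continuous_intros)

lemma R_lip: "\<bar>R y - R x\<bar> \<le> \<bar>y - x\<bar>"
  unfolding R_def max_def min_def by (auto simp: abs_if)

lemma avg_diff:
  fixes g h :: "real \<Rightarrow> real"
  assumes "g integrable_on {x-a..x}" "h integrable_on {x-a..x}"
  shows "avg a g x - avg a h x = avg a (\<lambda>y. g y - h y) x"
  unfolding avg_def using integral_diff[OF assms] by (simp add: diff_divide_distrib)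

lemma cont_int: "continuous_on UNIV (g::real\<Rightarrow>real) \<Longrightarrow> g integrable_on {u..v}"
  by (rule integrable_continuous_interval, erule continuous_on_subset) simp

locale conv =
  fixes \<tau> :: "nat \<Rightarrow> real"
  assumes tau_dec: "\<And>m. \<tau> (Suc m) < \<tau> m" and tau_nn: "\<And>m. 0 \<le> \<tau> m"
begin

definition a :: "nat \<Rightarrow> real" where "a m = \<tau> m - \<tau> (Suc m)"

lemma a_pos: "a m > 0" using tau_dec[of m] by (simp add: a_def)

primrec C :: "nat \<Rightarrow> nat \<Rightarrow> real \<Rightarrow> real" where
  "C 0 m = R"
| "C (Suc k) m = avg (a m) (C k (Suc m))"

lemma C_cont: "continuous_on UNIV (C k m)"
proof (induction k arbitrary: m)
  case 0 then show ?case by (simp add: R_cont)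
next
  case (Suc k) then show ?case by (simp add: avg_cont a_pos cont_int)
qed

lemma C_int: "C k m integrable_on {u..v}" by (rule cont_int[OF C_cont])

lemma C_01: "0 \<le> C k m x \<and> C k m x \<le> 1"
proof (induction k arbitrary: m x)
  case 0 then show ?case by (simp add: R_def)
next
  case (Suc k)
  have "\<bar>avg (a m) (C k (Suc m)) x - 1/2\<bar> \<le> 1/2"
  proof (rule avg_bound[OF a_pos C_int])
    fix y show "\<bar>C k (Suc m) y - 1/2\<bar> \<le> 1/2" using Suc.IH[of "Suc m" y] by arith
  qed
  then show ?case unfolding C.simps abs_le_iff by linarith
qed

lemma C_zero: "x \<le> 0 \<Longrightarrow> C k m x = 0"
proof (induction k arbitrary: m x)
  case 0 then show ?case by (simp add: R_def)
next
  case (Suc k)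
  have "\<bar>avg (a m) (C k (Suc m)) x - 0\<bar> \<le> 0"
    by (rule avg_bound[OF a_pos C_int]) (use Suc in auto)
  then show ?case by simp
qed

lemma C_one: "x \<ge> 1 + \<tau> m \<Longrightarrow> C k m x = 1"
proof (induction k arbitrary: m x)
  case 0 then show ?case using tau_nn[of m] by (simp add: R_def)
next
  case (Suc k)
  have "\<bar>avg (a m) (C k (Suc m)) x - 1\<bar> \<le> 0"
  proof (rule avg_bound[OF a_pos C_int])
    fix y assume "y \<in> {x - a m..x}"
    then have "y \<ge> 1 + \<tau> (Suc m)" using Suc.prems by (simp add: a_def)
    then show "\<bar>C k (Suc m) y - 1\<bar> \<le> 0" using Suc.IH by simp
  qed
  then show ?case by simp
qed

lemma C_step: "\<bar>C (Suc k) m x - C k m x\<bar> \<le> a (m + k)"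
proof (induction k arbitrary: m x)
  case 0
  have "\<bar>avg (a m) R x - R x\<bar> \<le> a m"
  proof (rule avg_bound[OF a_pos cont_int[OF R_cont]])
    fix y assume "y \<in> {x - a m..x}"
    then show "\<bar>R y - R x\<bar> \<le> a m" using R_lip[of y x] by (simp add: abs_le_iff)
  qed
  then show ?case by simp
next
  case (Suc k)
  have "\<bar>avg (a m) (\<lambda>y. C (Suc k) (Suc m) y - C k (Suc m) y) x - 0\<bar> \<le> a (Suc m + k)"
  proof (rule avg_bound[OF a_pos])
    show "(\<lambda>y. C (Suc k) (Suc m) y - C k (Suc m) y) integrable_on {x - a m..x}"
      by (rule integrable_diff[OF C_int C_int])
    fix y show "\<bar>C (Suc k) (Suc m) y - C k (Suc m) y - 0\<bar> \<le> a (Suc m + k)"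
      using Suc.IH[of "Suc m" y] by simp
  qed
  then show ?case
    using avg_diff[of "C (Suc k) (Suc m)" x "a m" "C k (Suc m)", OF C_int C_int] by simp
qed

lemma a_partial: "(\<Sum>i<n. a (m + i)) = \<tau> m - \<tau> (m + n)"
  by (induction n) (simp_all add: a_def)

lemma a_summable: "summable (\<lambda>i. a (m + i))"
proof (rule summableI_nonneg_bounded[where x = "\<tau> m"])
  show "0 \<le> a (m + n)" for n using a_pos[of "m+n"] by simp
  show "(\<Sum>i<n. a (m + i)) \<le> \<tau> m" for n using a_partial tau_nn[of "m+n"] by simp
qed

definition T :: "nat \<Rightarrow> real \<Rightarrow> real" where
  "T m x = R x + (\<Sum>i. C (Suc i) m x - C i m x)"

lemma C_lim: "(\<lambda>k. C k m x) \<longlonglongrightarrow> T m x"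
proof -
  have s: "summable (\<lambda>i. C (Suc i) m x - C i m x)"
    by (rule summable_comparison_test[OF _ a_summable[of m]]) (use C_step in auto)
  have "(\<lambda>k. R x + (\<Sum>i<k. C (Suc i) m x - C i m x)) \<longlonglongrightarrow> T m x"
    unfolding T_def by (intro tendsto_add tendsto_const summable_LIMSEQ[OF s])
  moreover have "R x + (\<Sum>i<k. C (Suc i) m x - C i m x) = C k m x" for k
    by (subst sum_lessThan_telescope) simp
  ultimately show ?thesis by simp
qed

lemma T_01: "0 \<le> T m x \<and> T m x \<le> 1"
proof
  show "0 \<le> T m x" by (rule LIMSEQ_le_const[OF C_lim]) (use C_01 in blast)
  show "T m x \<le> 1" by (rule LIMSEQ_le_const2[OF C_lim]) (use C_01 in blast)
qed

lemma T_zero: "x \<le> 0 \<Longrightarrow> T m x = 0"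
proof -
  assume h: "x \<le> 0"
  have "(\<lambda>k. C k m x) = (\<lambda>k. 0)" using C_zero[OF h] by simp
  then show ?thesis using LIMSEQ_unique[OF C_lim[of m x]] tendsto_const by metis
qed

lemma T_one: "x \<ge> 1 + \<tau> m \<Longrightarrow> T m x = 1"
proof -
  assume h: "x \<ge> 1 + \<tau> m"
  have "(\<lambda>k. C k m x) = (\<lambda>k. 1)" using C_one[OF h] by simp
  then show ?thesis using LIMSEQ_unique[OF C_lim[of m x]] tendsto_const by metis
qed

lemma C_norm: "norm (C k m x) \<le> 1" using C_01[of k m x] by simp

lemma T_int: "T m integrable_on {u..v}"
proof (rule dominated_convergence(1)[of "\<lambda>k. C k m" "{u..v}" "\<lambda>_. 1" "T m"])
  show "C k m integrable_on {u..v}" for k by (rule C_int)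
  show "(\<lambda>_. 1::real) integrable_on {u..v}" by (rule integrable_const_ivl)
  show "norm (C k m x) \<le> 1" for k x by (rule C_norm)
  show "(\<lambda>k. C k m x) \<longlonglongrightarrow> T m x" for x by (rule C_lim)
qed

lemma T_avg: "T m x = avg (a m) (T (Suc m)) x"
proof -
  have "(\<lambda>k. integral {x - a m..x} (C k (Suc m))) \<longlonglongrightarrow> integral {x - a m..x} (T (Suc m))"
  proof (rule dominated_convergence(2)[of "\<lambda>k. C k (Suc m)" "{x - a m..x}" "\<lambda>_. 1" "T (Suc m)"])
    show "C k (Suc m) integrable_on {x - a m..x}" for k by (rule C_int)
    show "(\<lambda>_. 1::real) integrable_on {x - a m..x}" by (rule integrable_const_ivl)
    show "norm (C k (Suc m) y) \<le> 1" for k y by (rule C_norm)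
    show "(\<lambda>k. C k (Suc m) y) \<longlonglongrightarrow> T (Suc m) y" for y by (rule C_lim)
  qed
  then have "(\<lambda>k. integral {x - a m..x} (C k (Suc m)) / a m) \<longlonglongrightarrow> integral {x - a m..x} (T (Suc m)) / a m"
    by (rule tendsto_divide[OF _ tendsto_const]) (use a_pos[of m] in simp)
  then have "(\<lambda>k. C (Suc k) m x) \<longlonglongrightarrow> avg (a m) (T (Suc m)) x"
    unfolding avg_def C.simps .
  moreover have "(\<lambda>k. C (Suc k) m x) \<longlonglongrightarrow> T m x"
    using C_lim LIMSEQ_Suc by blast
  ultimately show ?thesis using LIMSEQ_unique by blast
qed

lemma T_cont: "continuous_on UNIV (T m)"
proof -
  have "T m = avg (a m) (T (Suc m))" using T_avg by auto
  then show ?thesis using avg_cont[OF a_pos T_int] by simp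
qed

lemma T_deriv: "(T m has_real_derivative (T (Suc m) x - T (Suc m) (x - a m)) / a m) (at x)"
proof -
  have "T m = avg (a m) (T (Suc m))" using T_avg by auto
  then show ?thesis using avg_deriv[OF a_pos T_cont] by simp
qed

end

context conv begin

fun DT :: "nat \<Rightarrow> nat \<Rightarrow> real \<Rightarrow> real" where
  "DT 0 m x = T m x"
| "DT (Suc k) m x = (DT k (Suc m) x - DT k (Suc m) (x - a m)) / a m"

lemma DT_deriv: "(DT k m has_real_derivative DT (Suc k) m x) (at x)"
proof (induction k arbitrary: m x)
  case 0
  have "DT 0 m = T m" by (rule ext) simp
  then show ?case using T_deriv[of m x] by simp
next
  case (Suc k)
  have e: "DT (Suc k) m = (\<lambda>x. (DT k (Suc m) x - DT k (Suc m) (x - a m)) / a m)" by (rule ext) simp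
  have d2: "((\<lambda>x. DT k (Suc m) (x - a m)) has_real_derivative DT (Suc k) (Suc m) (x - a m) * 1) (at x)"
  proof (rule DERIV_chain2[of "DT k (Suc m)"])
    show "(DT k (Suc m) has_real_derivative DT (Suc k) (Suc m) (x - a m)) (at (x - a m))" by (rule Suc.IH)
    show "((\<lambda>x. x - a m) has_real_derivative 1) (at x)" by (auto intro!: derivative_eq_intros)
  qed
  show ?case unfolding e
    using DERIV_cdivide[OF DERIV_diff[OF Suc.IH[of "Suc m" x] d2], of "a m"] by simp
qed

lemma DT_bound: "\<bar>DT k m x\<bar> \<le> 2 ^ k / (\<Prod>j<k. a (m + j))"
proof (induction k arbitrary: m x)
  case 0 then show ?case using T_01[of m x] by simp
next
  case (Suc k)
  have p: "(\<Prod>j<Suc k. a (m + j)) = a m * (\<Prod>j<k. a (Suc m + j))"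
    by (simp add: prod.lessThan_Suc_shift del: prod.lessThan_Suc)
  have pp: "(\<Prod>j<k. a (Suc m + j)) > 0" by (rule prod_pos) (simp add: a_pos)
  have "\<bar>DT k (Suc m) x - DT k (Suc m) (x - a m)\<bar> \<le> 2 * (2 ^ k / (\<Prod>j<k. a (Suc m + j)))"
    using Suc.IH[of "Suc m" x] Suc.IH[of "Suc m" "x - a m"] by linarith
  then have ineq: "\<bar>DT k (Suc m) x - DT k (Suc m) (x - a m)\<bar> / a m \<le> 2 * (2 ^ k / (\<Prod>j<k. a (Suc m + j))) / a m"
    by (rule divide_right_mono) (use a_pos[of m] in simp)
  have eq2: "2 * (2 ^ k / (\<Prod>j<k. a (Suc m + j))) / a m = 2 ^ Suc k / (\<Prod>j<Suc k. a (m + j))"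
    unfolding p by simp
  have e: "\<bar>DT (Suc k) m x\<bar> = \<bar>DT k (Suc m) x - DT k (Suc m) (x - a m)\<bar> / a m"
    by (simp only: DT.simps abs_divide abs_of_pos[OF a_pos])
  show ?case unfolding e using ineq eq2 by (simp only:)
qed

lemma DT_zero: "x \<le> 0 \<Longrightarrow> DT k m x = 0"
proof (induction k arbitrary: m x)
  case 0 then show ?case using T_zero by simp
next
  case (Suc k)
  have "x - a m \<le> 0" using Suc.prems a_pos[of m] by simp
  then show ?case using Suc.IH[of x "Suc m"] Suc.IH[of "x - a m" "Suc m"] Suc.prems by simp
qed

lemma DT_top: "x \<ge> 1 + \<tau> m \<Longrightarrow> DT (Suc k) m x = 0"
proof (induction k arbitrary: m x)
  case 0
  have h1: "x \<ge> 1 + \<tau> (Suc m)" using 0 tau_dec[of m] by simp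
  have h2: "x - a m \<ge> 1 + \<tau> (Suc m)" using 0 by (simp add: a_def)
  show ?case using T_one[OF h1] T_one[OF h2] by simp
next
  case (Suc k)
  have h1: "x \<ge> 1 + \<tau> (Suc m)" using Suc.prems tau_dec[of m] by simp
  have h2: "x - a m \<ge> 1 + \<tau> (Suc m)" using Suc.prems by (simp add: a_def)
  have "DT (Suc (Suc k)) m x = (DT (Suc k) (Suc m) x - DT (Suc k) (Suc m) (x - a m)) / a m"
    by (simp only: DT.simps)
  then show ?case using Suc.IH[OF h1] Suc.IH[OF h2] by (simp del: DT.simps)
qed

end

lemma pascal_sum:
  fixes u v :: "nat \<Rightarrow> real"
  shows "(\<Sum>i\<le>k. real (k choose i) * (u (Suc i) * v (k - i) + u i * v (Suc (k - i)))) =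
         (\<Sum>i\<le>Suc k. real (Suc k choose i) * u i * v (Suc k - i))"
proof -
  have A: "(\<Sum>i\<le>Suc k. real (Suc k choose i) * u i * v (Suc k - i)) =
      u 0 * v (Suc k) + (\<Sum>i\<le>k. real (Suc k choose Suc i) * u (Suc i) * v (k - i))"
    by (subst sum.atMost_Suc_shift) simp
  have B: "(\<Sum>i\<le>k. real (Suc k choose Suc i) * u (Suc i) * v (k - i)) =
      (\<Sum>i\<le>k. real (k choose i) * u (Suc i) * v (k - i)) + (\<Sum>i\<le>k. real (k choose Suc i) * u (Suc i) * v (k - i))"
    by (simp add: sum.distrib[symmetric] algebra_simps)
  have C: "(\<Sum>i\<le>Suc k. real (k choose i) * u i * v (Suc k - i)) =
      u 0 * v (Suc k) + (\<Sum>i\<le>k. real (k choose Suc i) * u (Suc i) * v (k - i))"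
    by (subst sum.atMost_Suc_shift) simp
  have D: "(\<Sum>i\<le>Suc k. real (k choose i) * u i * v (Suc k - i)) = (\<Sum>i\<le>k. real (k choose i) * u i * v (Suc (k - i)))"
    by (simp add: Suc_diff_le)
  show ?thesis
    unfolding A B using C D by (simp add: sum.distrib algebra_simps)
qed

fun SC :: "real \<Rightarrow> (nat \<Rightarrow> real \<Rightarrow> real) \<Rightarrow> bool \<Rightarrow> nat \<Rightarrow> real \<Rightarrow> real" where
  "SC \<alpha> P b 0 x = (if b then sin (\<alpha> * P 0 x) else cos (\<alpha> * P 0 x))"
| "SC \<alpha> P b (Suc k) x = (if b then \<alpha> else -\<alpha>) *
     (\<Sum>i\<le>k. real (k choose i) * P (Suc i) x * SC \<alpha> P (\<not> b) (k - i) x)"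

lemma SC_deriv:
  assumes hP: "\<And>k x. (P k has_real_derivative P (Suc k) x) (at x)"
  shows "(SC \<alpha> P b n has_real_derivative SC \<alpha> P b (Suc n) x) (at x)"
proof (induction n arbitrary: b x rule: less_induct)
  case (less n)
  show ?case
  proof (cases n)
    case 0
    have e: "SC \<alpha> P b 0 = (\<lambda>x. if b then sin (\<alpha> * P 0 x) else cos (\<alpha> * P 0 x))" by (rule ext) simp
    show ?thesis
    proof (cases b)
      case True
      have "((\<lambda>x. sin (\<alpha> * P 0 x)) has_real_derivative cos (\<alpha> * P 0 x) * (\<alpha> * P (Suc 0) x)) (at x)"
        by (intro DERIV_chain2[OF DERIV_sin] DERIV_cmult hP)
      then show ?thesis using 0 True unfolding e by (simp add: algebra_simps)
    next
      case False
      have "((\<lambda>x. cos (\<alpha> * P 0 x)) has_real_derivative - sin (\<alpha> * P 0 x) * (\<alpha> * P (Suc 0) x)) (at x)"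
        by (intro DERIV_chain2[OF DERIV_cos] DERIV_cmult hP)
      then show ?thesis using 0 False unfolding e by (simp add: algebra_simps)
    qed
  next
    case (Suc k)
    define s where "s = (if b then \<alpha> else -\<alpha>)"
    have e: "SC \<alpha> P b (Suc k) = (\<lambda>x. s * (\<Sum>i\<le>k. real (k choose i) * P (Suc i) x * SC \<alpha> P (\<not> b) (k - i) x))"
      by (rule ext) (simp add: s_def)
    have d: "((\<lambda>x. real (k choose i) * P (Suc i) x * SC \<alpha> P (\<not> b) (k - i) x) has_real_derivative
        real (k choose i) * (P (Suc (Suc i)) x * SC \<alpha> P (\<not> b) (k - i) x + P (Suc i) x * SC \<alpha> P (\<not> b) (Suc (k - i)) x)) (at x)"
      if "i \<in> {..k}" for i
    proof -
      have "k - i < n" using Suc by simp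
      then have ih: "(SC \<alpha> P (\<not> b) (k - i) has_real_derivative SC \<alpha> P (\<not> b) (Suc (k - i)) x) (at x)"
        by (rule less.IH)
      have "((\<lambda>x. P (Suc i) x * SC \<alpha> P (\<not> b) (k - i) x) has_real_derivative
          P (Suc i) x * SC \<alpha> P (\<not> b) (Suc (k - i)) x + P (Suc (Suc i)) x * SC \<alpha> P (\<not> b) (k - i) x) (at x)"
        using DERIV_mult[OF hP ih] by (simp add: algebra_simps)
      from DERIV_cmult[OF this, of "real (k choose i)"] show ?thesis by (simp add: algebra_simps)
    qed
    have "(SC \<alpha> P b (Suc k) has_real_derivative s * (\<Sum>i\<le>k.
        real (k choose i) * (P (Suc (Suc i)) x * SC \<alpha> P (\<not> b) (k - i) x + P (Suc i) x * SC \<alpha> P (\<not> b) (Suc (k - i)) x))) (at x)"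
      unfolding e by (intro DERIV_cmult DERIV_sum d)
    moreover have "(\<Sum>i\<le>k. real (k choose i) * (P (Suc (Suc i)) x * SC \<alpha> P (\<not> b) (k - i) x + P (Suc i) x * SC \<alpha> P (\<not> b) (Suc (k - i)) x))
       = (\<Sum>i\<le>Suc k. real (Suc k choose i) * P (Suc i) x * SC \<alpha> P (\<not> b) (Suc k - i) x)"
      by (rule pascal_sum[of k "\<lambda>i. P (Suc i) x" "\<lambda>j. SC \<alpha> P (\<not> b) j x"])
    ultimately have "(SC \<alpha> P b (Suc k) has_real_derivative s * (\<Sum>i\<le>Suc k. real (Suc k choose i) * P (Suc i) x * SC \<alpha> P (\<not> b) (Suc k - i) x)) (at x)"
      by (simp only:)
    moreover have "SC \<alpha> P b (Suc (Suc k)) x = s * (\<Sum>i\<le>Suc k. real (Suc k choose i) * P (Suc i) x * SC \<alpha> P (\<not> b) (Suc k - i) x)"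
      unfolding s_def by (rule SC.simps(2))
    ultimately show ?thesis unfolding Suc by (simp only:)
  qed
qed

lemma W_choose:
  fixes q :: "nat \<Rightarrow> real"
  assumes q0: "\<And>j. q j \<ge> 0" and hq: "\<And>m n. m < n \<Longrightarrow> q m * real n \<le> q n * real (Suc m)"
  shows "real ((i + m) choose i) * (\<Prod>j<Suc i. q j) * (\<Prod>j<m. q j) \<le> (\<Prod>j<Suc (i + m). q j)"
proof (induction m)
  case 0 then show ?case by simp
next
  case (Suc m)
  define A where "A = (\<Prod>j<Suc i. q j)"
  define B where "B = (\<Prod>j<m. q j)"
  define E where "E = (\<Prod>j<Suc (i + m). q j)"
  have A0: "A \<ge> 0" "B \<ge> 0" "E \<ge> 0" unfolding A_def B_def E_def by (rule prod_nonneg, rule q0)+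
  have bin: "real (Suc m) * real ((i + Suc m) choose i) = real (Suc (i + m)) * real ((i + m) choose i)"
  proof -
    have "(Suc (i+m) - i) * (Suc (i + m) choose i) = Suc (i + m) * ((Suc (i + m) - 1) choose i)"
      by (rule binomial_absorb_comp)
    then have "Suc m * ((i + Suc m) choose i) = Suc (i + m) * ((i + m) choose i)" by simp
    then show ?thesis by (metis of_nat_mult)
  qed
  have IH: "real ((i + m) choose i) * A * B \<le> E" using Suc.IH unfolding A_def B_def E_def .
  have "real (Suc m) * (real ((i + Suc m) choose i) * A * (B * q m))
      = real (Suc (i + m)) * (real ((i + m) choose i) * A * B) * q m"
    using bin by (simp add: algebra_simps)
  also have "\<dots> \<le> real (Suc (i + m)) * E * q m"
    using IH q0[of m] by (intro mult_right_mono mult_left_mono) auto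
  also have "\<dots> = E * (q m * real (Suc (i + m)))" by (simp add: algebra_simps)
  also have "\<dots> \<le> E * (q (Suc (i + m)) * real (Suc m))"
    using hq[of m "Suc (i + m)"] A0 by (intro mult_left_mono) auto
  finally have "real (Suc m) * (real ((i + Suc m) choose i) * A * (B * q m)) \<le> real (Suc m) * (E * q (Suc (i + m)))"
    by (simp add: algebra_simps)
  then have "real ((i + Suc m) choose i) * A * (B * q m) \<le> E * q (Suc (i + m))"
    by (rule mult_left_le_imp_le) simp
  then show ?case unfolding A_def B_def E_def by simp
qed

lemma geom4: "(\<Sum>i\<le>k. (4::real) ^ (k - i)) \<le> 4 ^ Suc k / 3"
proof -
  have "(\<Sum>i\<le>k. (4::real) ^ (k - i)) = (\<Sum>i\<le>k. 4 ^ i)"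
    by (rule sum.reindex_bij_witness[of _ "\<lambda>i. k - i" "\<lambda>i. k - i"]) auto
  also have "\<dots> \<le> 4 ^ Suc k / 3"
    by (induction k) simp_all
  finally show ?thesis .
qed

lemma SC_bound:
  fixes q :: "nat \<Rightarrow> real"
  assumes q0: "\<And>j. q j \<ge> 0" and hq: "\<And>m n. m < n \<Longrightarrow> q m * real n \<le> q n * real (Suc m)"
    and hP: "\<And>j x. j \<ge> 1 \<Longrightarrow> \<bar>P j x\<bar> \<le> r ^ j * (\<Prod>i<j. q i)"
    and r: "r \<ge> 0" and al: "\<bar>\<alpha>\<bar> \<le> 2"
  shows "\<bar>SC \<alpha> P b k x\<bar> \<le> (4 * r) ^ k * (\<Prod>i<k. q i)"
proof (induction k arbitrary: b rule: less_induct)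
  case (less n)
  show ?case
  proof (cases n)
    case 0 then show ?thesis by auto
  next
    case (Suc k)
    define W where "W j = (\<Prod>i<j. q i)" for j
    have W0: "W j \<ge> 0" for j unfolding W_def by (auto intro: prod_nonneg q0)
    have tm: "\<bar>real (k choose i) * P (Suc i) x * SC \<alpha> P (\<not> b) (k - i) x\<bar> \<le> r ^ Suc i * (4 * r) ^ (k - i) * W (Suc k)"
      if "i \<in> {..k}" for i
    proof -
      have ik: "i \<le> k" using that by simp
      have h1: "\<bar>P (Suc i) x\<bar> \<le> r ^ Suc i * W (Suc i)" using hP[of "Suc i" x] by (simp add: W_def)
      have h2: "\<bar>SC \<alpha> P (\<not> b) (k - i) x\<bar> \<le> (4 * r) ^ (k - i) * W (k - i)"
        using less.IH[of "k - i" "\<not> b"] Suc by (simp add: W_def)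
      have wc: "real (k choose i) * W (Suc i) * W (k - i) \<le> W (Suc k)"
        using W_choose[OF q0 hq, of i "k - i"] ik by (simp add: W_def)
      have "\<bar>real (k choose i) * P (Suc i) x * SC \<alpha> P (\<not> b) (k - i) x\<bar>
          = real (k choose i) * \<bar>P (Suc i) x\<bar> * \<bar>SC \<alpha> P (\<not> b) (k - i) x\<bar>" by (simp add: abs_mult)
      also have "\<dots> \<le> real (k choose i) * (r ^ Suc i * W (Suc i)) * ((4 * r) ^ (k - i) * W (k - i))"
        using h1 h2 by (intro mult_mono mult_left_mono) (auto simp: r)
      also have "\<dots> = r ^ Suc i * (4 * r) ^ (k - i) * (real (k choose i) * W (Suc i) * W (k - i))"
        by (simp add: algebra_simps)
      also have "\<dots> \<le> r ^ Suc i * (4 * r) ^ (k - i) * W (Suc k)"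
        using wc r by (intro mult_left_mono) auto
      finally show ?thesis .
    qed
    have sumeq: "(\<Sum>i\<le>k. r ^ Suc i * (4 * r) ^ (k - i) * W (Suc k)) = r ^ Suc k * W (Suc k) * (\<Sum>i\<le>k. 4 ^ (k - i))"
    proof -
      have "r ^ Suc i * (4 * r) ^ (k - i) * W (Suc k) = r ^ Suc k * W (Suc k) * 4 ^ (k - i)" if "i \<le> k" for i
      proof -
        have "r ^ Suc i * r ^ (k - i) = r ^ Suc k" using that by (simp add: power_add[symmetric])
        then show ?thesis by (simp add: power_mult_distrib algebra_simps; blast)
      qed
      then have "(\<Sum>i\<le>k. r ^ Suc i * (4 * r) ^ (k - i) * W (Suc k)) = (\<Sum>i\<le>k. r ^ Suc k * W (Suc k) * 4 ^ (k - i))"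
        by (intro sum.cong) simp_all
      then show ?thesis by (simp only: sum_distrib_left)
    qed
    have "\<bar>SC \<alpha> P b (Suc k) x\<bar> = \<bar>\<alpha>\<bar> * \<bar>\<Sum>i\<le>k. real (k choose i) * P (Suc i) x * SC \<alpha> P (\<not> b) (k - i) x\<bar>"
      by (simp add: abs_mult)
    also have "\<dots> \<le> 2 * (\<Sum>i\<le>k. r ^ Suc i * (4 * r) ^ (k - i) * W (Suc k))"
      using al by (intro mult_mono order_trans[OF sum_abs sum_mono] tm) auto
    also have "\<dots> = 2 * (r ^ Suc k * W (Suc k)) * (\<Sum>i\<le>k. 4 ^ (k - i))" unfolding sumeq by simp
    also have "\<dots> \<le> 2 * (r ^ Suc k * W (Suc k)) * (4 ^ Suc k / 3)"
      using geom4[of k] W0 r by (intro mult_left_mono) auto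
    also have "\<dots> \<le> (4 * r) ^ Suc k * W (Suc k)"
      using W0[of "Suc k"] r by (simp add: power_mult_distrib)
    finally show ?thesis using Suc by (simp add: W_def)
  qed
qed

definition E :: "nat \<Rightarrow> real" where "E n = (exp ^^ n) 1"

lemma E_Suc: "E (Suc n) = exp (E n)" by (simp add: E_def)
lemma E_ge1: "E n \<ge> 1"
proof (induction n)
  case 0 then show ?case by (simp add: E_def)
next
  case (Suc n) then show ?case unfolding E_Suc using exp_ge_add_one_self[of "E n"] by linarith
qed

lemma E_le_Suc: "E n \<le> E (Suc n)"
  unfolding E_Suc using exp_ge_add_one_self[of "E n"] by linarith

lemma E_mono: "m \<le> n \<Longrightarrow> E m \<le> E n"
  by (induction n) (auto simp: le_Suc_eq intro: order_trans[OF _ E_le_Suc])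

lemma lnp_Suc: "(ln ^^ Suc j) x = ln ((ln ^^ j) x)" by simp
lemma lnp_Suc': "(ln ^^ Suc j) x = (ln ^^ j) (ln x)" by (simp add: funpow_Suc_right del: funpow.simps)

lemma L_ge: "E n \<le> x \<Longrightarrow> j \<le> n \<Longrightarrow> E (n - j) \<le> (ln ^^ j) x"
proof (induction j)
  case 0 then show ?case by simp
next
  case (Suc j)
  have h: "E (n - j) \<le> (ln ^^ j) x" using Suc by simp
  have "n - j = Suc (n - Suc j)" using Suc.prems by simp
  then have "E (n - j) = exp (E (n - Suc j))" by (simp add: E_Suc)
  then have "ln (E (n - j)) = E (n - Suc j)" by simp
  moreover have "ln (E (n - j)) \<le> ln ((ln ^^ j) x)"
    using h E_ge1[of "n-j"] by (subst ln_le_cancel_iff) auto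
  ultimately show ?case by simp
qed

lemma L_ge1: "E n \<le> x \<Longrightarrow> j \<le> n \<Longrightarrow> 1 \<le> (ln ^^ j) x"
  using L_ge E_ge1 order_trans by blast

lemma L_mono: "E n \<le> x \<Longrightarrow> x \<le> y \<Longrightarrow> j \<le> Suc n \<Longrightarrow> (ln ^^ j) x \<le> (ln ^^ j) y"
proof (induction j)
  case 0 then show ?case by simp
next
  case (Suc j)
  have h: "(ln ^^ j) x \<le> (ln ^^ j) y" using Suc by simp
  have p: "1 \<le> (ln ^^ j) x" using L_ge1[of n x j] Suc.prems by simp
  show ?case using h p by simp
qed

lemma L_deriv: "E n \<le> x \<Longrightarrow> j \<le> Suc n \<Longrightarrow>
   ((ln ^^ j) has_real_derivative 1 / (\<Prod>i<j. (ln ^^ i) x)) (at x)"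
proof (induction j)
  case 0 then show ?case by (simp add: DERIV_ident)
next
  case (Suc j)
  have ih: "((ln ^^ j) has_real_derivative 1 / (\<Prod>i<j. (ln ^^ i) x)) (at x)" using Suc by simp
  have p: "0 < (ln ^^ j) x" using L_ge1[of n x j] Suc.prems by simp
  have "((\<lambda>y. ln ((ln ^^ j) y)) has_real_derivative inverse ((ln ^^ j) x) * (1 / (\<Prod>i<j. (ln ^^ i) x))) (at x)"
    by (rule DERIV_chain2[OF DERIV_ln[OF p] ih])
  moreover have "(ln ^^ Suc j) = (\<lambda>y. ln ((ln ^^ j) y))" by (rule ext) simp
  ultimately show ?case by (simp add: field_simps)
qed

lemma L_double: "\<exists>K\<ge>(2::real). \<forall>x\<ge>K. (ln ^^ i) (2 * x) \<le> 2 * (ln ^^ i) x"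
proof (induction i)
  case 0 then show ?case by (intro exI[of _ 2]) simp
next
  case (Suc i)
  from Suc.IH obtain K :: real where K1: "K \<ge> 2" and K2: "\<forall>x\<ge>K. (ln ^^ i) (2 * x) \<le> 2 * (ln ^^ i) x"
    by (elim exE conjE)
  have K: "\<And>x::real. x \<ge> K \<Longrightarrow> (ln ^^ i) (2 * x) \<le> 2 * (ln ^^ i) x" using K2 by simp
  define K' where "K' = max 2 (max (exp K) (exp (E i)))"
  have "\<forall>x\<ge>K'. (ln ^^ Suc i) (2 * x) \<le> 2 * (ln ^^ Suc i) x"
  proof (intro allI impI)
    fix x assume x: "x \<ge> K'"
    have x2: "x \<ge> 2" and xK: "x \<ge> exp K" and xE: "x \<ge> exp (E i)" using x by (auto simp: K'_def)
    have xp: "x > 0" using x2 by simp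
    have l1: "ln x \<ge> K"
    proof -
      have "ln (exp K) \<le> ln x" using xK xp by (subst ln_le_cancel_iff) auto
      then show ?thesis by simp
    qed
    have l2: "ln (2 * x) \<ge> E i"
    proof -
      have "ln (2 * x) \<ge> ln x" using xp by simp
      moreover have "ln (exp (E i)) \<le> ln x" using xE xp by (subst ln_le_cancel_iff) auto
      ultimately have "ln (exp (E i)) \<le> ln (2 * x)" by linarith
      then show ?thesis by simp
    qed
    have l3: "ln (2 * x) \<le> 2 * ln x"
    proof -
      have "ln (2 * x) = ln 2 + ln x" using xp by (simp add: ln_mult)
      moreover have "ln 2 \<le> ln x" using x2 by simp
      ultimately show ?thesis by linarith
    qed
    have "(ln ^^ Suc i) (2 * x) = (ln ^^ i) (ln (2 * x))" by (rule lnp_Suc')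
    also have "\<dots> \<le> (ln ^^ i) (2 * ln x)" by (rule L_mono[OF l2 l3]) simp
    also have "\<dots> \<le> 2 * (ln ^^ i) (ln x)" by (rule K[OF l1])
    also have "\<dots> = 2 * (ln ^^ Suc i) x" by (simp only: lnp_Suc')
    finally show "(ln ^^ Suc i) (2 * x) \<le> 2 * (ln ^^ Suc i) x" .
  qed
  moreover have "K' \<ge> 2" by (simp add: K'_def)
  ultimately show ?case by (intro exI[of _ K'] conjI)
qed

definition tauf :: "nat \<Rightarrow> nat \<Rightarrow> real \<Rightarrow> nat \<Rightarrow> real" where
  "tauf l N \<epsilon> m = (ln ^^ Suc l) (real (m + N)) powr (-\<epsilon>)"

definition Pi_ln :: "nat \<Rightarrow> real \<Rightarrow> real" where
  "Pi_ln l x = (\<Prod>i<Suc l. (ln ^^ i) x)"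

lemma tau_step:
  assumes N: "E (Suc l) \<le> real N" and e: "\<epsilon> > 0"
  shows "tauf l N \<epsilon> m - tauf l N \<epsilon> (Suc m) \<ge>
     \<epsilon> * (ln ^^ Suc l) (real (Suc m + N)) powr (-\<epsilon>-1) / Pi_ln l (real (Suc m + N))"
proof -
  define g where "g x = (ln ^^ Suc l) x powr (-\<epsilon>)" for x
  define g' where "g' x = -\<epsilon> * (ln ^^ Suc l) x powr (-\<epsilon>-1) * (1 / Pi_ln l x)" for x
  define a where "a = real (m + N)"
  define b where "b = real (Suc m + N)"
  have ab: "a < b" by (simp add: a_def b_def)
  have aE: "E (Suc l) \<le> a" using N by (simp add: a_def)
  have der: "(g has_real_derivative g' x) (at x)" if "a \<le> x" "x \<le> b" for x
  proof -
    have xE: "E (Suc l) \<le> x" using aE that by simp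
    have yp: "0 < (ln ^^ Suc l) x" using L_ge1[OF xE, of "Suc l"] by simp
    have "((\<lambda>x. (ln ^^ Suc l) x powr (-\<epsilon>)) has_real_derivative
        (-\<epsilon> * (ln ^^ Suc l) x powr (-\<epsilon> - 1)) * (1 / (\<Prod>i<Suc l. (ln ^^ i) x))) (at x)"
      by (rule DERIV_chain2[OF has_real_derivative_powr[OF yp] L_deriv[OF xE]]) simp
    then show ?thesis unfolding g_def g'_def Pi_ln_def by simp
  qed
  obtain z where z: "a < z" "z < b" "g b - g a = (b - a) * g' z"
    using MVT2[OF ab der] by blast
  have zE: "E (Suc l) \<le> z" using aE z by simp
  have diff: "tauf l N \<epsilon> m - tauf l N \<epsilon> (Suc m) = \<epsilon> * (ln ^^ Suc l) z powr (-\<epsilon>-1) / Pi_ln l z"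
    using z(3) unfolding tauf_def g_def g'_def a_def b_def by simp
  have p1: "(ln ^^ Suc l) z \<le> (ln ^^ Suc l) b" by (rule L_mono[OF zE]) (use z in simp_all)
  have p1': "1 \<le> (ln ^^ Suc l) z" by (rule L_ge1[OF zE]) simp
  have A: "(ln ^^ Suc l) b powr (-\<epsilon>-1) \<le> (ln ^^ Suc l) z powr (-\<epsilon>-1)"
    by (rule powr_mono2') (use p1 p1' e in simp_all)
  have B: "Pi_ln l z \<le> Pi_ln l b"
    unfolding Pi_ln_def
  proof (rule prod_mono)
    fix i assume "i \<in> {..<Suc l}"
    then have i: "i \<le> Suc l" by simp
    show "0 \<le> (ln ^^ i) z \<and> (ln ^^ i) z \<le> (ln ^^ i) b"
      using L_ge1[OF zE i] L_mono[OF zE _, of b i] z i by simp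
  qed
  have Bp: "0 < Pi_ln l z" unfolding Pi_ln_def
  proof (rule prod_pos)
    fix i assume "i \<in> {..<Suc l}"
    then show "0 < (ln ^^ i) z" using L_ge1[OF zE, of i] by simp
  qed
  have Ap: "0 \<le> (ln ^^ Suc l) b powr (-\<epsilon>-1)" by simp
  have "\<epsilon> * (ln ^^ Suc l) b powr (-\<epsilon>-1) / Pi_ln l b \<le> \<epsilon> * (ln ^^ Suc l) z powr (-\<epsilon>-1) / Pi_ln l z"
    by (rule frac_le) (use A B Bp e in \<open>simp_all add: mult_left_mono\<close>)
  then show ?thesis unfolding diff b_def .
qed

definition mu :: "nat \<Rightarrow> nat \<Rightarrow> real \<Rightarrow> nat \<Rightarrow> real" where
  "mu l N \<epsilon> j = (\<Prod>i\<in>{1..l}. (ln ^^ i) (real (Suc j + N))) * (ln ^^ Suc l) (real (Suc j + N)) powr (1 + \<epsilon>)"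

lemma prod_shift1: "(\<Prod>i<Suc l. f i) = (f 0 :: real) * (\<Prod>i\<in>{1..l}. f i)"
proof -
  have "(\<Prod>i\<in>{1..l}. f i) = (\<Prod>i<l. f (Suc i))"
    using prod.atLeast1_atMost_eq[of f l] by simp
  then show ?thesis by (simp add: prod.lessThan_Suc_shift del: prod.lessThan_Suc)
qed

lemma tau_conv:
  assumes N: "E (Suc l) \<le> real N" and e: "\<epsilon> > 0"
  shows "conv (tauf l N \<epsilon>)"
proof
  fix m
  show "0 \<le> tauf l N \<epsilon> m" by (simp add: tauf_def)
  have bE: "E (Suc l) \<le> real (Suc m + N)" using N by simp
  have p1: "0 < (ln ^^ Suc l) (real (Suc m + N))" using L_ge1[OF bE, of "Suc l"] by simp
  have p2: "0 < Pi_ln l (real (Suc m + N))" unfolding Pi_ln_def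
  proof (rule prod_pos)
    fix i assume "i \<in> {..<Suc l}"
    then show "0 < (ln ^^ i) (real (Suc m + N))" using L_ge1[OF bE, of i] by simp
  qed
  have "0 < \<epsilon> * (ln ^^ Suc l) (real (Suc m + N)) powr (-\<epsilon>-1) / Pi_ln l (real (Suc m + N))"
    using p1 p2 e by simp
  then show "tauf l N \<epsilon> (Suc m) < tauf l N \<epsilon> m" using tau_step[OF N e, of m] by linarith
qed

lemma tau0: assumes N: "E (Suc l) \<le> real N" and e: "\<epsilon> > 0" shows "tauf l N \<epsilon> 0 \<le> 1"
proof -
  have "1 \<le> (ln ^^ Suc l) (real N)" using L_ge1[OF N, of "Suc l"] by simp
  then have "(ln ^^ Suc l) (real N) powr (-\<epsilon>) \<le> 1 powr (-\<epsilon>)"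
    by (intro powr_mono2') (use e in simp_all)
  then show ?thesis by (simp add: tauf_def)
qed

lemma a_inv_bound:
  assumes N: "E (Suc l) \<le> real N" and e: "\<epsilon> > 0"
  shows "1 / (tauf l N \<epsilon> j - tauf l N \<epsilon> (Suc j)) \<le> real (Suc N) / \<epsilon> * (real (Suc j) * mu l N \<epsilon> j)"
proof -
  define b where "b = real (Suc j + N)"
  define y where "y = (ln ^^ Suc l) b"
  define P where "P = (\<Prod>i\<in>{1..l}. (ln ^^ i) b)"
  have bE: "E (Suc l) \<le> b" using N by (simp add: b_def)
  have yp: "1 \<le> y" unfolding y_def using L_ge1[OF bE, of "Suc l"] by simp
  have Pp: "0 < P" unfolding P_def
  proof (rule prod_pos)
    fix i assume "i \<in> {1..l}"
    then show "0 < (ln ^^ i) b" using L_ge1[OF bE, of i] by simp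
  qed
  have bp: "b > 0" unfolding b_def by simp
  have Pi: "Pi_ln l b = b * P" unfolding Pi_ln_def P_def prod_shift1 by simp
  have st: "tauf l N \<epsilon> j - tauf l N \<epsilon> (Suc j) \<ge> \<epsilon> * y powr (-\<epsilon>-1) / (b * P)"
    using tau_step[OF N e, of j] unfolding b_def[symmetric] y_def[symmetric] Pi .
  have yy: "y powr (-\<epsilon>-1) = 1 / y powr (1 + \<epsilon>)"
  proof -
    have ee: "-\<epsilon>-1 = - (1 + \<epsilon>)" by simp
    have "y powr (-\<epsilon>-1) = y powr (- (1 + \<epsilon>))" by (simp only: ee)
    also have "\<dots> = inverse (y powr (1 + \<epsilon>))" by (rule powr_minus)
    also have "\<dots> = 1 / y powr (1 + \<epsilon>)" by (simp add: divide_inverse)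
    finally show ?thesis .
  qed
  have pos: "0 < \<epsilon> * y powr (-\<epsilon>-1) / (b * P)" using e yp bp Pp by simp
  have "1 / (tauf l N \<epsilon> j - tauf l N \<epsilon> (Suc j)) \<le> 1 / (\<epsilon> * y powr (-\<epsilon>-1) / (b * P))"
  proof (rule divide_left_mono[OF st])
    have "0 < tauf l N \<epsilon> j - tauf l N \<epsilon> (Suc j)" using pos st by linarith
    then show "0 < (tauf l N \<epsilon> j - tauf l N \<epsilon> (Suc j)) * (\<epsilon> * y powr (-\<epsilon>-1) / (b * P))"
      using pos by (rule mult_pos_pos)
  qed simp
  also have "\<dots> = b * (P * y powr (1 + \<epsilon>)) / \<epsilon>"
    unfolding yy using e yp by (simp add: field_simps)
  also have "\<dots> \<le> real (Suc N) * real (Suc j) * (P * y powr (1 + \<epsilon>)) / \<epsilon>"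
  proof -
    have "b \<le> real (Suc N) * real (Suc j)" unfolding b_def by (simp add: algebra_simps)
    then show ?thesis using Pp e by (intro divide_right_mono mult_right_mono) auto
  qed
  also have "\<dots> = real (Suc N) / \<epsilon> * (real (Suc j) * mu l N \<epsilon> j)"
    unfolding mu_def P_def y_def b_def by simp
  finally show ?thesis .
qed

lemma mu_nonneg: assumes N: "E (Suc l) \<le> real N" shows "0 \<le> mu l N \<epsilon> j"
proof -
  have bE: "E (Suc l) \<le> real (Suc j + N)" using N by simp
  have "0 \<le> (\<Prod>i\<in>{1..l}. (ln ^^ i) (real (Suc j + N)))"
  proof (rule prod_nonneg)
    fix i assume "i \<in> {1..l}"
    then show "0 \<le> (ln ^^ i) (real (Suc j + N))" using L_ge1[OF bE, of i] by simp
  qed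
  then show ?thesis unfolding mu_def by simp
qed

lemma mu_mono: assumes N: "E (Suc l) \<le> real N" and e: "\<epsilon> > 0" and jj: "j \<le> j'"
  shows "mu l N \<epsilon> j \<le> mu l N \<epsilon> j'"
proof -
  have bE: "E (Suc l) \<le> real (Suc j + N)" using N by simp
  have le: "real (Suc j + N) \<le> real (Suc j' + N)" using jj by simp
  have A: "(\<Prod>i\<in>{1..l}. (ln ^^ i) (real (Suc j + N))) \<le> (\<Prod>i\<in>{1..l}. (ln ^^ i) (real (Suc j' + N)))"
  proof (rule prod_mono)
    fix i assume "i \<in> {1..l}"
    then have i: "i \<le> Suc l" by simp
    show "0 \<le> (ln ^^ i) (real (Suc j + N)) \<and> (ln ^^ i) (real (Suc j + N)) \<le> (ln ^^ i) (real (Suc j' + N))"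
      using L_ge1[OF bE, of i] L_mono[OF bE le, of i] i by simp
  qed
  have A0: "0 \<le> (\<Prod>i\<in>{1..l}. (ln ^^ i) (real (Suc j + N)))"
  proof (rule prod_nonneg)
    fix i assume "i \<in> {1..l}"
    then show "0 \<le> (ln ^^ i) (real (Suc j + N))" using L_ge1[OF bE, of i] by simp
  qed
  have y1: "1 \<le> (ln ^^ Suc l) (real (Suc j + N))" using L_ge1[OF bE, of "Suc l"] by simp
  have B: "(ln ^^ Suc l) (real (Suc j + N)) powr (1 + \<epsilon>) \<le> (ln ^^ Suc l) (real (Suc j' + N)) powr (1 + \<epsilon>)"
    by (rule powr_mono2) (use e y1 L_mono[OF bE le, of "Suc l"] in simp_all)
  show ?thesis unfolding mu_def by (rule mult_mono'[OF A B A0]) simp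
qed

lemma q_cond: assumes N: "E (Suc l) \<le> real N" and e: "\<epsilon> > 0" and mn: "m < n"
  shows "(real (Suc m) * mu l N \<epsilon> m) * real n \<le> (real (Suc n) * mu l N \<epsilon> n) * real (Suc m)"
proof -
  have "mu l N \<epsilon> m \<le> mu l N \<epsilon> n" using mu_mono[OF N e] mn by simp
  then have "mu l N \<epsilon> m * real n \<le> mu l N \<epsilon> n * real (Suc n)"
    using mu_nonneg[OF N, of \<epsilon> n] by (intro mult_mono) auto
  from mult_left_mono[OF this, of "real (Suc m)"] show ?thesis by (simp add: algebra_simps)
qed

lemma deriv_affine:
  assumes hG: "\<And>k x. (G k has_real_derivative G (Suc k) x) (at x)"
  shows "((\<lambda>t. c ^ k * G k (c * t - d)) has_real_derivative c ^ Suc k * G (Suc k) (c * t - d)) (at t)"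
proof -
  have "((\<lambda>t. G k (c * t - d)) has_real_derivative G (Suc k) (c * t - d) * c) (at t)"
    by (rule DERIV_chain2[OF hG]) (auto intro!: derivative_eq_intros)
  from DERIV_cmult[OF this, of "c ^ k"] show ?thesis by (simp add: algebra_simps)
qed

locale cfg =
  fixes l N :: nat and \<epsilon> :: real
  assumes N: "E (Suc l) \<le> real N" and e: "0 < \<epsilon>"
begin

abbreviation "\<tau> \<equiv> tauf l N \<epsilon>"

sublocale cv: conv \<tau> by (rule tau_conv[OF N e])

definition DD :: "nat \<Rightarrow> real \<Rightarrow> real" where "DD k x = cv.DT k 0 x"
definition W :: "nat \<Rightarrow> real" where "W k = (\<Prod>j<k. real (Suc j) * mu l N \<epsilon> j)"
definition B :: real where "B = 2 * real (Suc N) / \<epsilon>"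

lemma W_nonneg: "0 \<le> W k" unfolding W_def
  by (rule prod_nonneg) (use mu_nonneg[OF N] in simp)

lemma B_pos: "0 < B" unfolding B_def using e by simp

lemma DD_deriv: "(DD k has_real_derivative DD (Suc k) x) (at x)"
proof -
  have "DD k = cv.DT k 0" by (rule ext) (simp add: DD_def)
  then show ?thesis using cv.DT_deriv[of k 0 x] by (simp add: DD_def)
qed

lemma DD0: "DD 0 x = cv.T 0 x" by (simp add: DD_def)
lemma DD0_01: "0 \<le> DD 0 x \<and> DD 0 x \<le> 1" using cv.T_01 by (simp add: DD_def)
lemma DD_zero: "x \<le> 0 \<Longrightarrow> DD k x = 0" by (simp add: DD_def cv.DT_zero)
lemma DD_top: "x \<ge> 2 \<Longrightarrow> DD (Suc k) x = 0"
  unfolding DD_def by (rule cv.DT_top) (use tau0[OF N e] in simp)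
lemma DD0_top: "x \<ge> 2 \<Longrightarrow> DD 0 x = 1"
  unfolding DD_def using cv.T_one[of 0 x] tau0[OF N e] by simp

lemma DD_bound: "\<bar>DD k x\<bar> \<le> B ^ k * W k"
proof -
  have "\<bar>DD k x\<bar> \<le> 2 ^ k / (\<Prod>j<k. cv.a j)" using cv.DT_bound[of k 0 x] by (simp add: DD_def)
  also have "\<dots> = 2 ^ k * (\<Prod>j<k. 1 / cv.a j)" by (simp add: prod_dividef)
  also have "\<dots> \<le> 2 ^ k * (\<Prod>j<k. real (Suc N) / \<epsilon> * (real (Suc j) * mu l N \<epsilon> j))"
  proof (rule mult_left_mono[OF prod_mono])
    fix j assume "j \<in> {..<k}"
    have "0 < cv.a j" by (rule cv.a_pos)
    then show "0 \<le> 1 / cv.a j \<and> 1 / cv.a j \<le> real (Suc N) / \<epsilon> * (real (Suc j) * mu l N \<epsilon> j)"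
      using a_inv_bound[OF N e, of j] by (simp add: cv.a_def)
  qed simp
  also have "\<dots> = 2 ^ k * ((real (Suc N) / \<epsilon>) ^ k * W k)"
    unfolding W_def by (simp only: prod.distrib prod_constant card_lessThan)
  also have "\<dots> = B ^ k * W k"
  proof -
    have "2 * (real (Suc N) / \<epsilon>) = B" unfolding B_def by simp
    then have "2 ^ k * (real (Suc N) / \<epsilon>) ^ k = B ^ k" by (metis power_mult_distrib)
    then show ?thesis by (simp only: mult.assoc[symmetric])
  qed
  finally show ?thesis .
qed

end

context cfg begin

lemma typeB: "\<exists>f D. smooth_derivs_nonneg f D \<and> admissible TypeB f \<and> (\<forall>x\<ge>0. 0 \<le> f x \<and> f x \<le> 1) \<and>
   (\<forall>k\<ge>1. D k 1 = 0) \<and> (\<forall>k\<ge>1. \<forall>x\<ge>0. \<bar>D k x\<bar> \<le> (32 * B) ^ k * W k)"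
proof (intro exI conjI)
  show "smooth_derivs_nonneg (\<lambda>_. 0) (\<lambda>_ _. 0)"
    unfolding smooth_derivs_nonneg_def by (auto intro: has_field_derivative_at_within DERIV_const)
  show "admissible TypeB (\<lambda>_. 0)" by (simp add: admissible_def supp_nonneg_def)
  show "\<forall>k\<ge>1. \<forall>x\<ge>0. \<bar>(0::real)\<bar> \<le> (32 * B) ^ k * W k"
    using B_pos W_nonneg by simp
qed auto

definition fA :: "real \<Rightarrow> real" where "fA t = 1 - DD 0 (2 * t - 2)"
definition DA :: "nat \<Rightarrow> real \<Rightarrow> real" where
  "DA k t = (if k = 0 then fA t else - (2 ^ k * DD k (2 * t - 2)))"

lemma DA_deriv: "(DA k has_real_derivative DA (Suc k) x) (at x)"
proof (cases k)
  case 0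
  have "((\<lambda>t. 2 ^ 0 * DD 0 (2 * t - 2)) has_real_derivative 2 ^ Suc 0 * DD (Suc 0) (2 * x - 2)) (at x)"
    by (rule deriv_affine[where G=DD, OF DD_deriv])
  then have "((\<lambda>t. 1 - DD 0 (2 * t - 2)) has_real_derivative 0 - 2 ^ Suc 0 * DD (Suc 0) (2 * x - 2)) (at x)"
    by (intro DERIV_diff DERIV_const) simp
  moreover have "DA 0 = (\<lambda>t. 1 - DD 0 (2 * t - 2))" by (rule ext) (simp add: DA_def fA_def)
  ultimately show ?thesis using 0 by (simp add: DA_def)
next
  case (Suc m)
  have "((\<lambda>t. 2 ^ k * DD k (2 * t - 2)) has_real_derivative 2 ^ Suc k * DD (Suc k) (2 * x - 2)) (at x)"
    by (rule deriv_affine[where G=DD, OF DD_deriv])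
  then have "((\<lambda>t. - (2 ^ k * DD k (2 * t - 2))) has_real_derivative - (2 ^ Suc k * DD (Suc k) (2 * x - 2))) (at x)"
    by (rule DERIV_minus)
  moreover have "DA k = (\<lambda>t. - (2 ^ k * DD k (2 * t - 2)))" by (rule ext) (simp add: DA_def Suc)
  ultimately show ?thesis by (simp add: DA_def)
qed

lemma typeA: "\<exists>f D. smooth_derivs_nonneg f D \<and> admissible TypeA f \<and> (\<forall>x\<ge>0. 0 \<le> f x \<and> f x \<le> 1) \<and>
   (\<forall>k\<ge>1. D k 1 = 0) \<and> (\<forall>k\<ge>1. \<forall>x\<ge>0. \<bar>D k x\<bar> \<le> (32 * B) ^ k * W k)"
proof (intro exI conjI)
  show "smooth_derivs_nonneg fA DA"
    unfolding smooth_derivs_nonneg_def using DA_deriv by (auto simp: DA_def intro: has_field_derivative_at_within)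
  have sub: "{x. 0 \<le> x \<and> fA x \<noteq> 0} \<subseteq> {0..2}"
  proof
    fix x assume x: "x \<in> {x. 0 \<le> x \<and> fA x \<noteq> 0}"
    have "x \<le> 2"
    proof (rule ccontr)
      assume "\<not> x \<le> 2"
      then have "DD 0 (2 * x - 2) = 1" by (intro DD0_top) simp
      then show False using x by (simp add: fA_def)
    qed
    then show "x \<in> {0..2}" using x by simp
  qed
  have "supp_nonneg fA \<subseteq> {0..2}" unfolding supp_nonneg_def by (rule closure_minimal[OF sub]) simp
  moreover have "\<forall>t\<in>{0..1}. fA t = 1" by (auto simp: fA_def intro!: DD_zero)
  ultimately show "admissible TypeA fA" by (simp add: admissible_def)
  show "\<forall>x\<ge>0. 0 \<le> fA x \<and> fA x \<le> 1" using DD0_01 by (simp add: fA_def)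
  show "\<forall>k\<ge>1. DA k 1 = 0" by (simp add: DA_def DD_zero)
  show "\<forall>k\<ge>1. \<forall>x\<ge>0. \<bar>DA k x\<bar> \<le> (32 * B) ^ k * W k"
  proof (intro allI impI)
    fix k :: nat and x :: real assume k: "k \<ge> 1" and x: "x \<ge> 0"
    have "\<bar>DA k x\<bar> = 2 ^ k * \<bar>DD k (2 * x - 2)\<bar>" using k by (simp add: DA_def abs_mult)
    also have "\<dots> \<le> 2 ^ k * (B ^ k * W k)" by (rule mult_left_mono[OF DD_bound]) simp
    also have "\<dots> = (2 * B) ^ k * W k" by (simp add: power_mult_distrib)
    also have "\<dots> \<le> (32 * B) ^ k * W k"
      using B_pos W_nonneg by (intro mult_right_mono power_mono) auto
    finally show "\<bar>DA k x\<bar> \<le> (32 * B) ^ k * W k" .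
  qed
qed

end

context cfg begin

definition PC :: "nat \<Rightarrow> real \<Rightarrow> real" where
  "PC k t = 4 ^ k * DD k (4 * t - 2) + 2 ^ k * DD k (2 * t - 2)"

lemma PC_deriv: "(PC k has_real_derivative PC (Suc k) x) (at x)"
proof -
  have "((\<lambda>t. 4 ^ k * DD k (4 * t - 2) + 2 ^ k * DD k (2 * t - 2)) has_real_derivative
     4 ^ Suc k * DD (Suc k) (4 * x - 2) + 2 ^ Suc k * DD (Suc k) (2 * x - 2)) (at x)"
    by (intro DERIV_add deriv_affine[where G=DD, OF DD_deriv])
  moreover have "PC k = (\<lambda>t. 4 ^ k * DD k (4 * t - 2) + 2 ^ k * DD k (2 * t - 2))" by (rule ext) (simp add: PC_def)
  ultimately show ?thesis by (simp add: PC_def)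
qed

lemma PC_bound: "j \<ge> 1 \<Longrightarrow> \<bar>PC j t\<bar> \<le> (8 * B) ^ j * W j"
proof -
  assume j: "j \<ge> 1"
  define Y where "Y = B ^ j * W j"
  have W0: "0 \<le> Y" using B_pos W_nonneg by (simp add: Y_def)
  have b1: "\<bar>DD j (4 * t - 2)\<bar> \<le> Y" unfolding Y_def by (rule DD_bound)
  have b2: "\<bar>DD j (2 * t - 2)\<bar> \<le> Y" unfolding Y_def by (rule DD_bound)
  have "\<bar>PC j t\<bar> \<le> 4 ^ j * \<bar>DD j (4 * t - 2)\<bar> + 2 ^ j * \<bar>DD j (2 * t - 2)\<bar>"
    unfolding PC_def using abs_triangle_ineq[of "4 ^ j * DD j (4 * t - 2)" "2 ^ j * DD j (2 * t - 2)"]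
    by (simp add: abs_mult)
  also have "\<dots> \<le> 4 ^ j * Y + 2 ^ j * Y"
    using b1 b2 by (intro add_mono mult_left_mono) simp_all
  also have "\<dots> \<le> 4 ^ j * Y + 4 ^ j * Y"
  proof -
    have "(2::real) ^ j \<le> 4 ^ j" by (rule power_mono) simp_all
    then show ?thesis using W0 by (intro add_left_mono mult_right_mono) simp_all
  qed
  also have "\<dots> = (2 * 4 ^ j) * Y" by simp
  also have "\<dots> \<le> (2 ^ j * 4 ^ j) * Y"
  proof -
    have "(2::real) \<le> 2 ^ j" using power_increasing[of 1 j "2::real"] j by simp
    then show ?thesis using W0 by (intro mult_right_mono) simp_all
  qed
  also have "(2 ^ j * 4 ^ j) * Y = (8 * B) ^ j * W j"
  proof -
    have "(2::real) ^ j * 4 ^ j * B ^ j = (2 * 4 * B) ^ j" by (simp only: power_mult_distrib)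
    then show ?thesis unfolding Y_def by (simp only: mult.assoc[symmetric]) simp
  qed
  finally show ?thesis .
qed

definition fC :: "real \<Rightarrow> real" where "fC t = sin (pi / 2 * PC 0 t)"
definition DC :: "nat \<Rightarrow> real \<Rightarrow> real" where "DC k t = SC (pi / 2) PC True k t"

lemma PC0: "PC 0 t = DD 0 (4 * t - 2) + DD 0 (2 * t - 2)" by (simp add: PC_def)

lemma fC_zero: "fC t \<noteq> 0 \<Longrightarrow> 1/2 < t \<and> t < 2"
proof (rule ccontr)
  assume h: "fC t \<noteq> 0" and n: "\<not> (1/2 < t \<and> t < 2)"
  show False
  proof (cases "t \<le> 1/2")
    case True
    then have "PC 0 t = 0" unfolding PC0 by (simp add: DD_zero)
    then show False using h by (simp add: fC_def)
  next
    case False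
    then have "t \<ge> 2" using n by simp
    then have "PC 0 t = 2" unfolding PC0 by (simp add: DD0_top)
    then show False using h by (simp add: fC_def)
  qed
qed

lemma typeC: "\<exists>f D. smooth_derivs_nonneg f D \<and> admissible TypeC f \<and> (\<forall>x\<ge>0. 0 \<le> f x \<and> f x \<le> 1) \<and>
   (\<forall>k\<ge>1. D k 1 = 0) \<and> (\<forall>k\<ge>1. \<forall>x\<ge>0. \<bar>D k x\<bar> \<le> (32 * B) ^ k * W k)"
proof (intro exI conjI)
  show "smooth_derivs_nonneg fC DC"
    unfolding smooth_derivs_nonneg_def
  proof (intro conjI allI impI)
    fix x :: real show "DC 0 x = fC x" by (simp add: DC_def fC_def)
  next
    fix k and x :: real
    show "(DC k has_real_derivative DC (Suc k) x) (at x within {0..})"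
      unfolding DC_def by (rule has_field_derivative_at_within[OF SC_deriv[where P=PC, OF PC_deriv]])
  qed
  have sub: "{x. 0 \<le> x \<and> fC x \<noteq> 0} \<subseteq> {1/2..2}"
  proof
    fix x assume "x \<in> {x. 0 \<le> x \<and> fC x \<noteq> 0}"
    then have "1/2 < x \<and> x < 2" using fC_zero by simp
    then show "x \<in> {1/2..2}" by simp
  qed
  have "supp_nonneg fC \<subseteq> {1/2..2}" unfolding supp_nonneg_def by (rule closure_minimal[OF sub]) simp
  moreover have "\<forall>t\<in>{1..2}. \<bar>fC t\<bar>^2 + \<bar>fC (t/2)\<bar>^2 = 1"
  proof
    fix t :: real assume t: "t \<in> {1..2}"
    define v where "v = DD 0 (2 * t - 2)"
    have "PC 0 t = 1 + v" unfolding PC0 v_def using t by (simp add: DD0_top)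
    then have "fC t = cos (pi / 2 * v)" unfolding fC_def by (simp add: distrib_left sin_add)
    moreover have "PC 0 (t/2) = v" unfolding PC0 v_def using t by (simp add: DD_zero)
    then have "fC (t/2) = sin (pi / 2 * v)" unfolding fC_def by simp
    ultimately show "\<bar>fC t\<bar>^2 + \<bar>fC (t/2)\<bar>^2 = 1" by simp
  qed
  ultimately show "admissible TypeC fC" by (simp add: admissible_def)
  show "\<forall>x\<ge>0. 0 \<le> fC x \<and> fC x \<le> 1"
  proof (intro allI impI conjI)
    fix x :: real
    have "0 \<le> PC 0 x" "PC 0 x \<le> 2" unfolding PC0 using DD0_01[of "4*x-2"] DD0_01[of "2*x-2"] by simp_all
    then have "0 \<le> pi / 2 * PC 0 x" "pi / 2 * PC 0 x \<le> pi" by (simp_all add: field_simps)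
    then show "0 \<le> fC x" unfolding fC_def by (rule sin_ge_zero)
    show "fC x \<le> 1" unfolding fC_def by simp
  qed
  show "\<forall>k\<ge>1. DC k 1 = 0"
  proof (intro allI impI)
    fix k :: nat assume "k \<ge> 1"
    then obtain m where m: "k = Suc m" by (cases k) auto
    have "PC (Suc i) 1 = 0" for i unfolding PC_def by (simp add: DD_zero DD_top)
    then show "DC k 1 = 0" unfolding DC_def m by simp
  qed
  show "\<forall>k\<ge>1. \<forall>x\<ge>0. \<bar>DC k x\<bar> \<le> (32 * B) ^ k * W k"
  proof (intro allI impI)
    fix k :: nat and x :: real
    have "\<bar>SC (pi / 2) PC True k x\<bar> \<le> (4 * (8 * B)) ^ k * (\<Prod>i<k. real (Suc i) * mu l N \<epsilon> i)"
    proof (rule SC_bound)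
      show "\<And>j. 0 \<le> real (Suc j) * mu l N \<epsilon> j" using mu_nonneg[OF N] by simp
      show "\<And>m n. m < n \<Longrightarrow> real (Suc m) * mu l N \<epsilon> m * real n \<le> real (Suc n) * mu l N \<epsilon> n * real (Suc m)"
        by (rule q_cond[OF N e])
      show "\<And>j x. 1 \<le> j \<Longrightarrow> \<bar>PC j x\<bar> \<le> (8 * B) ^ j * (\<Prod>i<j. real (Suc i) * mu l N \<epsilon> i)"
        using PC_bound unfolding W_def by simp
      show "0 \<le> 8 * B" using B_pos by simp
      show "\<bar>pi / 2\<bar> \<le> 2" using pi_less_4 by simp
    qed
    then show "\<bar>DC k x\<bar> \<le> (32 * B) ^ k * W k" unfolding DC_def W_def by simp
  qed
qed

end

context cfg begin

lemma W_le: "k \<ge> 1 \<Longrightarrow> W k \<le> (real k * mu l N \<epsilon> (k - 1)) ^ k"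
proof -
  assume k: "k \<ge> 1"
  have "W k \<le> (\<Prod>j<k. real k * mu l N \<epsilon> (k - 1))"
    unfolding W_def
  proof (rule prod_mono)
    fix j assume j: "j \<in> {..<k}"
    have m0: "0 \<le> mu l N \<epsilon> j" by (rule mu_nonneg[OF N])
    have m1: "mu l N \<epsilon> j \<le> mu l N \<epsilon> (k - 1)" using mu_mono[OF N e] j by simp
    have "real (Suc j) \<le> real k" using j by simp
    then show "0 \<le> real (Suc j) * mu l N \<epsilon> j \<and> real (Suc j) * mu l N \<epsilon> j \<le> real k * mu l N \<epsilon> (k - 1)"
      using m0 m1 by (auto intro: mult_mono)
  qed
  then show ?thesis by simp
qed

lemma all_bound:
  "\<forall>ty. \<exists>f D. smooth_derivs_nonneg f D \<and> admissible ty f \<and> (\<forall>x\<ge>0. 0 \<le> f x \<and> f x \<le> 1) \<and>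
     (\<forall>k\<ge>1. D k 1 = 0) \<and> (\<forall>k\<ge>1. \<forall>x\<ge>0. \<bar>D k x\<bar> \<le> (32 * B * real k * mu l N \<epsilon> (k - 1)) ^ k)"
proof
  fix ty
  have key: "(32 * B) ^ k * W k \<le> (32 * B * real k * mu l N \<epsilon> (k - 1)) ^ k" if "k \<ge> 1" for k
  proof -
    have "(32 * B) ^ k * W k \<le> (32 * B) ^ k * (real k * mu l N \<epsilon> (k - 1)) ^ k"
      using W_le[OF that] B_pos by (intro mult_left_mono) simp_all
    then show ?thesis by (simp add: power_mult_distrib mult.assoc)
  qed
  have gen: "\<exists>f D. smooth_derivs_nonneg f D \<and> admissible ty f \<and> (\<forall>x\<ge>0. 0 \<le> f x \<and> f x \<le> 1) \<and>
     (\<forall>k\<ge>1. D k 1 = 0) \<and> (\<forall>k\<ge>1. \<forall>x\<ge>0. \<bar>D k x\<bar> \<le> (32 * B) ^ k * W k)"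
    using typeA typeB typeC by (cases ty) auto
  then obtain f D where fD: "smooth_derivs_nonneg f D" "admissible ty f" "\<forall>x\<ge>0. 0 \<le> f x \<and> f x \<le> 1"
     "\<forall>k\<ge>1. D k 1 = 0" "\<forall>k\<ge>1. \<forall>x\<ge>0. \<bar>D k x\<bar> \<le> (32 * B) ^ k * W k" by blast
  show "\<exists>f D. smooth_derivs_nonneg f D \<and> admissible ty f \<and> (\<forall>x\<ge>0. 0 \<le> f x \<and> f x \<le> 1) \<and>
     (\<forall>k\<ge>1. D k 1 = 0) \<and> (\<forall>k\<ge>1. \<forall>x\<ge>0. \<bar>D k x\<bar> \<le> (32 * B * real k * mu l N \<epsilon> (k - 1)) ^ k)"
  proof (intro exI conjI)
    show "\<forall>k\<ge>1. \<forall>x\<ge>0. \<bar>D k x\<bar> \<le> (32 * B * real k * mu l N \<epsilon> (k - 1)) ^ k"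
      using fD(5) key order_trans by blast
  qed (use fD in auto)
qed

end

lemma E1_le3: "E (Suc 0) \<le> real 3" using exp_le by (simp add: E_def)

lemma ln_k3: assumes k: "k \<ge> (3::nat)" shows "ln (real (k + 3)) \<le> 2 * ln (real k)"
proof -
  have "real (k + 3) \<le> real k ^ 2"
  proof -
    have "3 * k \<le> k * k" using mult_le_mono1[OF k, of k] .
    then have "k + 3 \<le> k * k" using k by linarith
    then have "real (k + 3) \<le> real (k * k)" by (simp only: of_nat_le_iff)
    then show ?thesis by (simp add: power2_eq_square)
  qed
  then have "ln (real (k + 3)) \<le> ln (real k ^ 2)" using k by (subst ln_le_cancel_iff) auto
  also have "\<dots> = 2 * ln (real k)" using k by (simp add: ln_realpow)
  finally show ?thesis .
qed

lemma two_powr: "0 < \<epsilon> \<Longrightarrow> \<epsilon> \<le> 1 \<Longrightarrow> (2::real) powr (1 + \<epsilon>) \<le> 4"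
proof -
  assume "0 < \<epsilon>" "\<epsilon> \<le> 1"
  then have "(2::real) powr (1 + \<epsilon>) \<le> 2 powr 2" by (intro powr_mono) simp_all
  also have "\<dots> = 4" by simp
  finally show ?thesis .
qed

lemma part1_num3:
  assumes k: "k \<ge> (3::nat)" and e: "0 < \<epsilon>" "\<epsilon> \<le> 1"
  shows "(32 * (2 * real (Suc 3) / \<epsilon>) * real k * (ln (real (k + 3)) powr (1 + \<epsilon>))) ^ k
     \<le> 4096 * (4096 / \<epsilon>) ^ k * real k ^ k * ln (real k) powr (real k * (1 + \<epsilon>))"
proof -
  define Lp where "Lp = ln (real k) powr (1 + \<epsilon>)"
  have lk: "1 \<le> ln (real k)"
  proof -
    have "exp 1 \<le> real k" using exp_le k by simp
    then have "ln (exp 1) \<le> ln (real k)" using k by (subst ln_le_cancel_iff) auto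
    then show ?thesis by simp
  qed
  have Lp0: "0 \<le> Lp" unfolding Lp_def by simp
  have "ln (real (k + 3)) powr (1 + \<epsilon>) \<le> (2 * ln (real k)) powr (1 + \<epsilon>)"
    using ln_k3[OF k] e lk by (intro powr_mono2) simp_all
  also have "\<dots> = 2 powr (1 + \<epsilon>) * Lp" unfolding Lp_def using lk by (simp add: powr_mult)
  also have "\<dots> \<le> 4 * Lp" using two_powr[OF e] Lp0 by (intro mult_right_mono) simp_all
  finally have mu: "ln (real (k + 3)) powr (1 + \<epsilon>) \<le> 4 * Lp" .
  have "32 * (2 * real (Suc 3) / \<epsilon>) * real k * (ln (real (k + 3)) powr (1 + \<epsilon>)) \<le>
        32 * (2 * real (Suc 3) / \<epsilon>) * real k * (4 * Lp)"
    using mu e by (intro mult_left_mono) simp_all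
  also have "\<dots> = (1024 / \<epsilon>) * real k * Lp" by simp
  finally have X: "32 * (2 * real (Suc 3) / \<epsilon>) * real k * (ln (real (k + 3)) powr (1 + \<epsilon>)) \<le> (1024 / \<epsilon>) * real k * Lp" .
  have "(32 * (2 * real (Suc 3) / \<epsilon>) * real k * (ln (real (k + 3)) powr (1 + \<epsilon>))) ^ k \<le> ((1024 / \<epsilon>) * real k * Lp) ^ k"
    by (rule power_mono[OF X]) (use e in simp)
  also have "\<dots> = (1024 / \<epsilon>) ^ k * real k ^ k * Lp ^ k" by (simp only: power_mult_distrib)
  also have "Lp ^ k = ln (real k) powr (real k * (1 + \<epsilon>))" unfolding Lp_def using lk by (simp add: powr_power)
  also have "(1024 / \<epsilon>) ^ k * real k ^ k * ln (real k) powr (real k * (1 + \<epsilon>))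
      \<le> 4096 * (4096 / \<epsilon>) ^ k * real k ^ k * ln (real k) powr (real k * (1 + \<epsilon>))"
  proof -
    have "(1024 / \<epsilon>) ^ k \<le> (4096 / \<epsilon>) ^ k" using e by (intro power_mono) (simp_all add: divide_right_mono)
    also have "\<dots> \<le> 4096 * (4096 / \<epsilon>) ^ k" using e by simp
    finally show ?thesis by (intro mult_right_mono) simp_all
  qed
  finally show ?thesis .
qed

lemma part1_num12:
  assumes k: "k \<in> {1, 2::nat}" and e: "0 < \<epsilon>" "\<epsilon> \<le> 1"
  shows "(32 * (2 * real (Suc 3) / \<epsilon>) * real k * (ln (real (k + 3)) powr (1 + \<epsilon>))) ^ k
     \<le> 4096 * (4096 / \<epsilon>) ^ k * real k ^ k"
proof -
  have l1: "1 \<le> ln (real (k + 3))"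
  proof -
    have "exp 1 \<le> real (k + 3)" using exp_le by simp
    then have "ln (exp 1) \<le> ln (real (k + 3))" by (subst ln_le_cancel_iff) auto
    then show ?thesis by simp
  qed
  have l4: "ln (real (k + 3)) \<le> 4"
  proof -
    have "ln (real (k + 3)) \<le> real (k + 3) - 1" by (rule ln_le_minus_one) simp
    then show ?thesis using k by auto
  qed
  have "ln (real (k + 3)) powr (1 + \<epsilon>) \<le> ln (real (k + 3)) powr 2" using l1 e by (intro powr_mono) simp_all
  also have "\<dots> = ln (real (k + 3)) ^ 2" using l1 by simp
  also have "\<dots> \<le> 4 ^ 2" using l1 l4 by (intro power_mono) simp_all
  finally have mu: "ln (real (k + 3)) powr (1 + \<epsilon>) \<le> 16" by simp
  have "32 * (2 * real (Suc 3) / \<epsilon>) * real k * (ln (real (k + 3)) powr (1 + \<epsilon>)) \<le> 32 * (2 * real (Suc 3) / \<epsilon>) * real k * 16"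
    using mu e by (intro mult_left_mono) simp_all
  also have "\<dots> = (4096 / \<epsilon>) * real k" by simp
  finally have X: "32 * (2 * real (Suc 3) / \<epsilon>) * real k * (ln (real (k + 3)) powr (1 + \<epsilon>)) \<le> (4096 / \<epsilon>) * real k" .
  have "(32 * (2 * real (Suc 3) / \<epsilon>) * real k * (ln (real (k + 3)) powr (1 + \<epsilon>))) ^ k \<le> ((4096 / \<epsilon>) * real k) ^ k"
    by (rule power_mono[OF X]) (use e in simp)
  also have "\<dots> = (4096 / \<epsilon>) ^ k * real k ^ k" by (simp only: power_mult_distrib)
  also have "\<dots> \<le> 4096 * (4096 / \<epsilon>) ^ k * real k ^ k" using e by simp
  finally show ?thesis .
qed

lemma mu0: "k \<ge> 1 \<Longrightarrow> mu 0 3 \<epsilon> (k - 1) = ln (real (k + 3)) powr (1 + \<epsilon>)"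
  unfolding mu_def by simp

lemma part1: "\<exists>c::real. c > 1 \<and>
     (\<forall>\<epsilon>::real. 0 < \<epsilon> \<and> \<epsilon> \<le> 1 \<longrightarrow> (\<forall>ty. \<exists>f D.
        smooth_derivs_nonneg f D \<and> admissible ty f \<and>
        (\<forall>x\<ge>0. 0 \<le> f x \<and> f x \<le> 1) \<and>
        (\<forall>k\<ge>3. \<forall>x\<ge>0. \<bar>D k x\<bar> \<le>
            c * (c/\<epsilon>)^k * real k ^ k * ln (real k) powr (real k * (1 + \<epsilon>))) \<and>
        (\<forall>k\<in>{1,2}. \<forall>x\<ge>0. \<bar>D k x\<bar> \<le> c * (c/\<epsilon>)^k * real k ^ k) \<and>
        (\<forall>k\<ge>1. D k 1 = 0)))"
proof (intro exI[of _ 4096] conjI allI impI)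
  show "(1::real) < 4096" by simp
  fix \<epsilon> :: real and ty assume e: "0 < \<epsilon> \<and> \<epsilon> \<le> 1"
  have e1: "0 < \<epsilon>" and e2: "\<epsilon> \<le> 1" using e by auto
  interpret cfg 0 3 \<epsilon> by standard (use E1_le3 e in auto)
  obtain f D where fD: "smooth_derivs_nonneg f D" "admissible ty f" "\<forall>x\<ge>0. 0 \<le> f x \<and> f x \<le> 1"
     "\<forall>k\<ge>1. D k 1 = 0" "\<forall>k\<ge>1. \<forall>x\<ge>0. \<bar>D k x\<bar> \<le> (32 * B * real k * mu 0 3 \<epsilon> (k - 1)) ^ k"
    using all_bound by blast
  have bd: "\<bar>D k x\<bar> \<le> (32 * (2 * real (Suc 3) / \<epsilon>) * real k * (ln (real (k + 3)) powr (1 + \<epsilon>))) ^ k"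
    if "k \<ge> 1" "x \<ge> 0" for k x
  proof -
    have "\<bar>D k x\<bar> \<le> (32 * B * real k * mu 0 3 \<epsilon> (k - 1)) ^ k" using fD(5) that by blast
    then show ?thesis unfolding mu0[OF that(1)] B_def .
  qed
  show "\<exists>f D. smooth_derivs_nonneg f D \<and> admissible ty f \<and>
        (\<forall>x\<ge>0. 0 \<le> f x \<and> f x \<le> 1) \<and>
        (\<forall>k\<ge>3. \<forall>x\<ge>0. \<bar>D k x\<bar> \<le>
            4096 * (4096/\<epsilon>)^k * real k ^ k * ln (real k) powr (real k * (1 + \<epsilon>))) \<and>
        (\<forall>k\<in>{1,2}. \<forall>x\<ge>0. \<bar>D k x\<bar> \<le> 4096 * (4096/\<epsilon>)^k * real k ^ k) \<and>
        (\<forall>k\<ge>1. D k 1 = 0)"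
  proof (intro exI conjI)
    show "\<forall>k\<ge>3. \<forall>x\<ge>0. \<bar>D k x\<bar> \<le> 4096 * (4096/\<epsilon>)^k * real k ^ k * ln (real k) powr (real k * (1 + \<epsilon>))"
    proof (intro allI impI)
      fix k :: nat and x :: real assume k: "k \<ge> 3" and x: "x \<ge> 0"
      show "\<bar>D k x\<bar> \<le> 4096 * (4096/\<epsilon>)^k * real k ^ k * ln (real k) powr (real k * (1 + \<epsilon>))"
        by (rule order_trans[OF bd[OF _ x] part1_num3[OF k e1 e2]]) (use k in auto)
    qed
    show "\<forall>k\<in>{1,2}. \<forall>x\<ge>0. \<bar>D k x\<bar> \<le> 4096 * (4096/\<epsilon>)^k * real k ^ k"
    proof (intro ballI allI impI)
      fix k :: nat and x :: real assume k: "k \<in> {1,2}" and x: "x \<ge> 0"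
      have "k \<ge> 1" using k by auto
      then show "\<bar>D k x\<bar> \<le> 4096 * (4096/\<epsilon>)^k * real k ^ k"
        by (rule order_trans[OF bd[OF _ x] part1_num12[OF k e1 e2]])
    qed
  qed (use fD in auto)
qed

lemma L_double_all: "\<exists>K::real. \<forall>i\<le>n. \<forall>x\<ge>K. (ln ^^ i) (2 * x) \<le> 2 * (ln ^^ i) x"
proof (induction n)
  case 0
  obtain K :: real where "K \<ge> 2" "\<forall>x\<ge>K. (ln ^^ 0) (2 * x) \<le> 2 * (ln ^^ 0) x"
    using L_double[of 0] by (elim exE conjE)
  then show ?case by (intro exI[of _ K]) simp
next
  case (Suc n)
  obtain K1 :: real where K1: "\<forall>i\<le>n. \<forall>x\<ge>K1. (ln ^^ i) (2 * x) \<le> 2 * (ln ^^ i) x"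
    using Suc.IH by (elim exE)
  obtain K2 :: real where K2: "K2 \<ge> 2" "\<forall>x\<ge>K2. (ln ^^ Suc n) (2 * x) \<le> 2 * (ln ^^ Suc n) x"
    using L_double[of "Suc n"] by (elim exE conjE)
  have "\<forall>i\<le>Suc n. \<forall>x\<ge>max K1 K2. (ln ^^ i) (2 * x) \<le> 2 * (ln ^^ i) x"
  proof (intro allI impI)
    fix i x assume i: "i \<le> Suc n" and x: "x \<ge> max K1 K2"
    show "(ln ^^ i) (2 * x) \<le> 2 * (ln ^^ i) x"
    proof (cases "i = Suc n")
      case True then show ?thesis using K2(2) x by simp
    next
      case False then have "i \<le> n" using i by simp
      then show ?thesis using K1 x by simp
    qed
  qed
  then show ?case by (intro exI)
qed

lemma part2_num:
  fixes l N :: nat and K0 :: real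
  assumes N: "E (Suc l) \<le> real N"
    and K0: "\<forall>i\<le>Suc l. \<forall>x\<ge>K0. (ln ^^ i) (2 * x) \<le> 2 * (ln ^^ i) x"
    and k: "k \<ge> N" "real k \<ge> K0" "k \<ge> 1"
    and e: "0 < \<epsilon>" "\<epsilon> \<le> 1"
  shows "(32 * (2 * real (Suc N) / \<epsilon>) * real k * mu l N \<epsilon> (k - 1)) ^ k \<le>
     (256 * real (Suc N) * 2 ^ l) * ((256 * real (Suc N) * 2 ^ l) / \<epsilon>) ^ k * real k ^ k *
            (\<Prod>j\<in>{1..l}. ((ln ^^ j) (real k)) ^ k) *
            ((ln ^^ (Suc l)) (real k)) powr (real k * (1 + \<epsilon>))"
proof -
  define c where "c = 256 * real (Suc N) * 2 ^ l"
  define P where "P = (\<Prod>j\<in>{1..l}. (ln ^^ j) (real k))"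
  define L where "L = (ln ^^ Suc l) (real k)"
  define Lp where "Lp = L powr (1 + \<epsilon>)"
  have kE: "E (Suc l) \<le> real k" using N k by simp
  have kNE: "E (Suc l) \<le> real (k + N)" using N by simp
  have ge1: "1 \<le> (ln ^^ i) (real k)" if "i \<le> Suc l" for i using L_ge1[OF kE that] .
  have dbl: "(ln ^^ i) (real (k + N)) \<le> 2 * (ln ^^ i) (real k)" if "i \<le> Suc l" for i
  proof -
    have "real (k + N) \<le> 2 * real k" using k by simp
    then have "(ln ^^ i) (real (k + N)) \<le> (ln ^^ i) (2 * real k)" by (rule L_mono[OF kNE]) (use that in simp)
    also have "\<dots> \<le> 2 * (ln ^^ i) (real k)" using K0 that k by simp
    finally show ?thesis .
  qed
  have P0: "0 \<le> P" unfolding P_def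
  proof (rule prod_nonneg)
    fix i assume "i \<in> {1..l}"
    then show "0 \<le> (ln ^^ i) (real k)" using ge1[of i] by simp
  qed
  have L1: "1 \<le> L" unfolding L_def by (rule ge1) simp
  have Lp0: "0 \<le> Lp" unfolding Lp_def by simp
  have kk: "Suc (k - 1) + N = k + N" using k by simp
  have A: "(\<Prod>i\<in>{1..l}. (ln ^^ i) (real (k + N))) \<le> 2 ^ l * P"
  proof -
    have "(\<Prod>i\<in>{1..l}. (ln ^^ i) (real (k + N))) \<le> (\<Prod>i\<in>{1..l}. 2 * (ln ^^ i) (real k))"
    proof (rule prod_mono)
      fix i assume i: "i \<in> {1..l}"
      then have "i \<le> Suc l" by simp
      then show "0 \<le> (ln ^^ i) (real (k + N)) \<and> (ln ^^ i) (real (k + N)) \<le> 2 * (ln ^^ i) (real k)"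
        using L_ge1[OF kNE, of i] dbl[of i] by simp
    qed
    also have "\<dots> = 2 ^ l * P" unfolding P_def by (simp add: prod.distrib)
    finally show ?thesis .
  qed
  have A0: "0 \<le> (\<Prod>i\<in>{1..l}. (ln ^^ i) (real (k + N)))"
  proof (rule prod_nonneg)
    fix i assume "i \<in> {1..l}"
    then show "0 \<le> (ln ^^ i) (real (k + N))" using L_ge1[OF kNE, of i] by simp
  qed
  have Bq: "(ln ^^ Suc l) (real (k + N)) powr (1 + \<epsilon>) \<le> 4 * Lp"
  proof -
    have "(ln ^^ Suc l) (real (k + N)) powr (1 + \<epsilon>) \<le> (2 * L) powr (1 + \<epsilon>)"
      unfolding L_def using dbl[of "Suc l"] L_ge1[OF kNE, of "Suc l"] e by (intro powr_mono2) simp_all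
    also have "\<dots> = 2 powr (1 + \<epsilon>) * Lp" unfolding Lp_def using L1 by (simp add: powr_mult)
    also have "\<dots> \<le> 4 * Lp" using two_powr[OF e] Lp0 by (intro mult_right_mono) simp_all
    finally show ?thesis .
  qed
  have mu: "mu l N \<epsilon> (k - 1) \<le> (2 ^ l * P) * (4 * Lp)"
    unfolding mu_def kk by (rule mult_mono[OF A Bq]) (use P0 Lp0 in simp_all)
  have "32 * (2 * real (Suc N) / \<epsilon>) * real k * mu l N \<epsilon> (k - 1) \<le> 32 * (2 * real (Suc N) / \<epsilon>) * real k * ((2 ^ l * P) * (4 * Lp))"
    using mu e by (intro mult_left_mono) simp_all
  also have "\<dots> = (c / \<epsilon>) * real k * P * Lp" unfolding c_def by (simp add: field_simps)
  finally have X: "32 * (2 * real (Suc N) / \<epsilon>) * real k * mu l N \<epsilon> (k - 1) \<le> (c / \<epsilon>) * real k * P * Lp" .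
  have X0: "0 \<le> 32 * (2 * real (Suc N) / \<epsilon>) * real k * mu l N \<epsilon> (k - 1)"
    using mu_nonneg[OF N] e by simp
  have "(32 * (2 * real (Suc N) / \<epsilon>) * real k * mu l N \<epsilon> (k - 1)) ^ k \<le> ((c / \<epsilon>) * real k * P * Lp) ^ k"
    by (rule power_mono[OF X X0])
  also have "\<dots> = (c / \<epsilon>) ^ k * real k ^ k * P ^ k * Lp ^ k" by (simp only: power_mult_distrib)
  also have "P ^ k = (\<Prod>j\<in>{1..l}. ((ln ^^ j) (real k)) ^ k)" unfolding P_def by (rule prod_power_distrib)
  also have "Lp ^ k = L powr (real k * (1 + \<epsilon>))" unfolding Lp_def using L1 by (simp add: powr_power)
  also have "(c / \<epsilon>) ^ k * real k ^ k * (\<Prod>j\<in>{1..l}. ((ln ^^ j) (real k)) ^ k) * L powr (real k * (1 + \<epsilon>))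
     \<le> c * (c / \<epsilon>) ^ k * real k ^ k * (\<Prod>j\<in>{1..l}. ((ln ^^ j) (real k)) ^ k) * L powr (real k * (1 + \<epsilon>))"
  proof -
    define Y where "Y = (c / \<epsilon>) ^ k * real k ^ k * (\<Prod>j\<in>{1..l}. ((ln ^^ j) (real k)) ^ k) * L powr (real k * (1 + \<epsilon>))"
    have pk: "(\<Prod>j\<in>{1..l}. ((ln ^^ j) (real k)) ^ k) = P ^ k" unfolding P_def by (rule prod_power_distrib[symmetric])
    have Y0: "0 \<le> Y" unfolding Y_def pk using P0 e unfolding c_def
      by (intro mult_nonneg_nonneg zero_le_power) simp_all
    have c1: "1 \<le> c"
    proof -
      have h1: "(1::real) \<le> 256 * real (Suc N)" by simp
      have h2: "(1::real) \<le> 2 ^ l" by simp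
      show ?thesis unfolding c_def using mult_mono[OF h1 h2] by simp
    qed
    have "1 * Y \<le> c * Y" by (rule mult_right_mono[OF c1 Y0])
    then show ?thesis unfolding Y_def by (simp add: mult.assoc)
  qed
  finally show ?thesis unfolding c_def L_def .
qed

lemma part2: "\<forall>l::nat. l \<ge> 1 \<longrightarrow> (\<exists>c::real. \<exists>K::nat. c > 1 \<and>
     (\<forall>\<epsilon>::real. 0 < \<epsilon> \<and> \<epsilon> \<le> 1 \<longrightarrow> (\<forall>ty. \<exists>f D.
        smooth_derivs_nonneg f D \<and> admissible ty f \<and>
        (\<forall>k\<ge>K. \<forall>x\<ge>0. \<bar>D k x\<bar> \<le>
            c * (c/\<epsilon>)^k * real k ^ k *
            (\<Prod>j\<in>{1..l}. ((ln ^^ j) (real k)) ^ k) *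
            ((ln ^^ (Suc l)) (real k)) powr (real k * (1 + \<epsilon>))))))"
proof (intro allI impI)
  fix l :: nat assume l: "l \<ge> 1"
  define N where "N = nat \<lceil>E (Suc l)\<rceil>"
  have N: "E (Suc l) \<le> real N" unfolding N_def by (rule real_nat_ceiling_ge)
  obtain K0 :: real where K0: "\<forall>i\<le>Suc l. \<forall>x\<ge>K0. (ln ^^ i) (2 * x) \<le> 2 * (ln ^^ i) x"
    using L_double_all[of "Suc l"] by (elim exE)
  define K where "K = max (nat \<lceil>K0\<rceil>) (max N 1)"
  define c where "c = 256 * real (Suc N) * 2 ^ l"
  have c1: "c > 1"
  proof -
    have h1: "(1::real) < 256 * real (Suc N)" by simp
    have h2: "(1::real) \<le> 2 ^ l" by simp
    have "1 * 1 < 256 * real (Suc N) * 2 ^ l" by (rule mult_less_le_imp_less[OF h1 h2]) simp_all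
    then show ?thesis unfolding c_def by simp
  qed
  show "\<exists>c::real. \<exists>K::nat. c > 1 \<and>
     (\<forall>\<epsilon>::real. 0 < \<epsilon> \<and> \<epsilon> \<le> 1 \<longrightarrow> (\<forall>ty. \<exists>f D.
        smooth_derivs_nonneg f D \<and> admissible ty f \<and>
        (\<forall>k\<ge>K. \<forall>x\<ge>0. \<bar>D k x\<bar> \<le>
            c * (c/\<epsilon>)^k * real k ^ k *
            (\<Prod>j\<in>{1..l}. ((ln ^^ j) (real k)) ^ k) *
            ((ln ^^ (Suc l)) (real k)) powr (real k * (1 + \<epsilon>)))))"
  proof (intro exI[of _ c] exI[of _ K] conjI allI impI c1)
    fix \<epsilon> :: real and ty assume e: "0 < \<epsilon> \<and> \<epsilon> \<le> 1"
    have e1: "0 < \<epsilon>" and e2: "\<epsilon> \<le> 1" using e by auto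
    interpret cfg l N \<epsilon> by standard (use N e1 in auto)
    obtain f D where fD: "smooth_derivs_nonneg f D" "admissible ty f"
       "\<forall>k\<ge>1. \<forall>x\<ge>0. \<bar>D k x\<bar> \<le> (32 * B * real k * mu l N \<epsilon> (k - 1)) ^ k"
      using all_bound by blast
    show "\<exists>f D. smooth_derivs_nonneg f D \<and> admissible ty f \<and>
        (\<forall>k\<ge>K. \<forall>x\<ge>0. \<bar>D k x\<bar> \<le>
            c * (c/\<epsilon>)^k * real k ^ k *
            (\<Prod>j\<in>{1..l}. ((ln ^^ j) (real k)) ^ k) *
            ((ln ^^ (Suc l)) (real k)) powr (real k * (1 + \<epsilon>)))"
    proof (intro exI conjI allI impI)
      show "smooth_derivs_nonneg f D" "admissible ty f" using fD by auto
      fix k :: nat and x :: real assume k: "k \<ge> K" and x: "x \<ge> 0"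
      have k1: "k \<ge> 1" and kN: "k \<ge> N" and kK: "real k \<ge> K0" using k unfolding K_def
        by (auto simp: nat_le_iff ceiling_le_iff)
      have "\<bar>D k x\<bar> \<le> (32 * B * real k * mu l N \<epsilon> (k - 1)) ^ k" using fD(3) k1 x by blast
      also have "\<dots> \<le> c * (c/\<epsilon>)^k * real k ^ k *
            (\<Prod>j\<in>{1..l}. ((ln ^^ j) (real k)) ^ k) *
            ((ln ^^ (Suc l)) (real k)) powr (real k * (1 + \<epsilon>))"
        unfolding B_def c_def by (rule part2_num[OF N K0 kN kK k1 e1 e2])
      finally show "\<bar>D k x\<bar> \<le> c * (c/\<epsilon>)^k * real k ^ k *
            (\<Prod>j\<in>{1..l}. ((ln ^^ j) (real k)) ^ k) *
            ((ln ^^ (Suc l)) (real k)) powr (real k * (1 + \<epsilon>))" .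
    qed
  qed
qed

theorem theorem3p1:
  shows "(\<exists>c::real. c > 1 \<and>
     (\<forall>\<epsilon>::real. 0 < \<epsilon> \<and> \<epsilon> \<le> 1 \<longrightarrow> (\<forall>ty. \<exists>f D.
        smooth_derivs_nonneg f D \<and> admissible ty f \<and>
        (\<forall>x\<ge>0. 0 \<le> f x \<and> f x \<le> 1) \<and>
        (\<forall>k\<ge>3. \<forall>x\<ge>0. \<bar>D k x\<bar> \<le>
            c * (c/\<epsilon>)^k * real k ^ k * ln (real k) powr (real k * (1 + \<epsilon>))) \<and>
        (\<forall>k\<in>{1,2}. \<forall>x\<ge>0. \<bar>D k x\<bar> \<le> c * (c/\<epsilon>)^k * real k ^ k) \<and>
        (\<forall>k\<ge>1. D k 1 = 0))))
   \<and>
   (\<forall>l::nat. l \<ge> 1 \<longrightarrow> (\<exists>c::real. \<exists>K::nat. c > 1 \<and>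
     (\<forall>\<epsilon>::real. 0 < \<epsilon> \<and> \<epsilon> \<le> 1 \<longrightarrow> (\<forall>ty. \<exists>f D.
        smooth_derivs_nonneg f D \<and> admissible ty f \<and>
        (\<forall>k\<ge>K. \<forall>x\<ge>0. \<bar>D k x\<bar> \<le>
            c * (c/\<epsilon>)^k * real k ^ k *
            (\<Prod>j\<in>{1..l}. ((ln ^^ j) (real k)) ^ k) *
            ((ln ^^ (Suc l)) (real k)) powr (real k * (1 + \<epsilon>)))))))"
  by (rule conjI[OF part1 part2])

end
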